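(* Let $N\ge2$ and $z_1,z_2\in\mathbb{C}$. Then $$D_{1,2}^{(N,2)}(z_1,z_2)=\frac{(z_1-\overline{z}_1)(z_2-\overline{z}_2)e^{-2|z_1-z_2|^2}}{(1-|z_1-z_2|^2)|z_1-\overline{z}_2|^2}\,\widehat{T}D_{1,1}^{(N,2)}(z_1,z_2)=-\frac{NZ_{N-1}^{(\mathrm{over})}(z_1,\overline{z}_2)}{Z_N^{(\mathrm g)}}|z_1-\overline{z}_1|^2|z_2-\overline{z}_2|^2(\overline{z}_2-z_1)e^{-2|z_1|^2-2|z_2|^2}\varkappa_{N-1}^{(\mathrm{over})}(z_2,\overline{z}_1|z_1,\overline{z}_2).$$
   Context: $dA(z)=d^2z/\pi$, $Z_N^{(\mathrm g)}=N!\prod_{k=0}^{N-1}\frac{(2k+1)!}{2^{2k+1}}$. Treat each complex variable $x$ and its conjugate $\overline x$ as independent variables. For $x,y\in\mathbb{C}$ put $\omega^{(\mathrm{over})}(z,\overline z|x,y):=(z-y)(\overline{z}-x)(1+(z-x)(\overline{z}-y))e^{-2z\overline{z}}$ (for $y=\overline x$ this is the weight $|z-\overline x|^2(1+|z-x|^2)e^{-2|z|^2}$). $Z_{n}^{(\mathrm{over})}(x,y):=\int_{\mathbb{C}^n}\prod_{j<k}|w_j-w_k|^2|w_j-\overline{w}_k|^2\prod_j|w_j-\overline{w}_j|^2\omega^{(\mathrm{over})}(w_j,\overline w_j|x,y)dA(w_j)$. For $y=\overline x$, $\varkappa_n^{(\mathrm{over})}(u,v|x,\overline x)=\sum_{k=0}^{n-1}\frac{q_{2k+1}(u)q_{2k}(v)-q_{2k}(u)q_{2k+1}(v)}{r_k}$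 is the skew-kernel of skew-orthogonal polynomials $q_k$ with skew-norms $r_k$ for the weight $\omega^{(\mathrm{over})}(\cdot|x,\overline x)$ and skew-product $\langle f,g\rangle_s=\int(f\overline g-g\overline f)(z-\overline z)\omega\,dA$ (i.e. $\langle q_{2k},q_{2\ell}\rangle_s=\langle q_{2k+1},q_{2\ell+1}\rangle_s=0$, $\langle q_{2k},q_{2\ell+1}\rangle_s=r_k\delta_{k\ell}$); it depends on $x,\overline x$ only through the weight's moments, and $\varkappa_n^{(\mathrm{over})}(u,v|x,y)$ denotes the same expression with $\overline x$ replaced by the independent variable $y$. Define $$D_{1,1}^{(N,2)}(z_1,z_2):=\frac{N(N-1)}{Z_N^{(\mathrm g)}}|z_1-\overline z_1|^2e^{-2|z_1|^2}\int_{\mathbb{C}^{N-2}}\prod_{2\le j<l\le N}|z_j-z_l|^2|z_j-\overline z_l|^2\prod_{l=2}^N|z_l-\overline z_l|^2\omega^{(\mathrm{over})}(z_l,\overline z_l|z_1,\overline z_1)\prod_{j=3}^NdA(z_j),$$ written as a function of $z_1,\overline z_1,z_2,\overline z_2$ (all moduli $|u|^2$ written as $u\overline u$), and the mean off-diagonal overlap $$D_{1,2}^{(N,2)}(z_1,z_2):=-\frac{N(N-1)}{Z_N^{(\mathrm g)}}|z_1-\overline z_1|^2|z_2-\overline z_2|^2|z_1-\overline z_2|^2e^{-2|z_1|^2-2|z_2|^2}\int_{\mathbb{C}^{N-2}}\prod_{3\le k<l\le N}|z_l-z_k|^2|z_l-\overline z_k|^2\prod_{j=3}^N|z_1-\overline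 z_j|^2|z_2-\overline z_j|^2\big(|z_1-z_j|^2|z_2-z_j|^2+(\overline z_1-\overline z_j)(z_2-z_j)\big)|z_j-\overline z_j|^2e^{-2|z_j|^2}dA(z_j).$$ The transposition $\widehat T$ acts on a function $g(z_1,\overline z_1,z_2,\overline z_2)$ by $\widehat Tg(z_1,\overline z_1,z_2,\overline z_2)=g(z_1,\overline z_2,z_2,\overline z_1)$. *)

theory Defs
  imports "HOL-Analysis.Analysis" "Jordan_Normal_Form.Gauss_Jordan_Elimination"
begin

text \<open>Measure dA(z) = d^2 z / pi: we integrate w.r.t. lborel on complex and divide by pi.\<close>

definition Zg :: "nat \<Rightarrow> real" where
  "Zg N = fact N * (\<Prod>k<N. fact (2*k+1) / 2 ^ (2*k+1))"

definition omega_over :: "complex \<Rightarrow> complex \<Rightarrow> complex \<Rightarrow> complex \<Rightarrow> complex" where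
  "omega_over z zb x y = (z - y) * (zb - x) * (1 + (z - x) * (zb - y)) * exp (-2 * z * zb)"

definition Z_over :: "nat \<Rightarrow> complex \<Rightarrow> complex \<Rightarrow> complex" where
  "Z_over n x y = (1 / of_real (pi ^ n)) *
     (\<integral>w. (\<Prod>k<n. \<Prod>j<k. of_real ((cmod (w j - w k))\<^sup>2 * (cmod (w j - cnj (w k)))\<^sup>2)) *
            (\<Prod>j<n. of_real ((cmod (w j - cnj (w j)))\<^sup>2) * omega_over (w j) (cnj (w j)) x y)
       \<partial>(PiM {..<n} (\<lambda>_. lborel)))"

definition skew_moment :: "complex \<Rightarrow> complex \<Rightarrow> nat \<Rightarrow> nat \<Rightarrow> complex" where
  "skew_moment x y j k = (1 / of_real pi) *
     (\<integral>z. (z ^ j * cnj z ^ k - z ^ k * cnj z ^ j) * (z - cnj z) * omega_over z (cnj z) x y \<partial>lborel)"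

definition skew_moment_mat :: "nat \<Rightarrow> complex \<Rightarrow> complex \<Rightarrow> complex mat" where
  "skew_moment_mat n x y = mat (2*n) (2*n) (\<lambda>(j,k). skew_moment x y j k)"

text \<open>The skew kernel varkappa_n^(over)(u,v|x,y) = sum_k (q_{2k+1}(u) q_{2k}(v) - q_{2k}(u) q_{2k+1}(v))/r_k,
  written through the moments: it equals sum_{j,k<2n} u^j (M^{-1})_{jk} v^k, M the skew moment matrix.\<close>
definition kappa_over :: "nat \<Rightarrow> complex \<Rightarrow> complex \<Rightarrow> complex \<Rightarrow> complex \<Rightarrow> complex" where
  "kappa_over n u v x y =
     (let B = the (mat_inverse (skew_moment_mat n x y))
      in \<Sum>j<2*n. \<Sum>k<2*n. u ^ j * B $$ (j,k) * v ^ k)"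

text \<open>D_{1,1}^{(N,2)} as a function of the four independent variables
  a = z1, b = conj z1, c = z2, d = conj z2. Integration variables w_l, l = 3..N.\<close>
definition D11 :: "nat \<Rightarrow> complex \<Rightarrow> complex \<Rightarrow> complex \<Rightarrow> complex \<Rightarrow> complex" where
  "D11 N a b c d =
     of_real (real N * (real N - 1) / Zg N) * ((a - b) * (b - a)) * exp (-2 * a * b) *
     (1 / of_real (pi ^ (N - 2))) *
     (\<integral>w. (let Z = (\<lambda>l. if l = 2 then c else w l);
                 Zb = (\<lambda>l. if l = 2 then d else cnj (w l))
             in (\<Prod>l\<in>{2..N}. \<Prod>j\<in>{2..<l}.
                    (Z j - Z l) * (Zb j - Zb l) * (Z j - Zb l) * (Zb j - Z l)) *
                (\<Prod>l\<in>{2..N}. (Z l - Zb l) * (Zb l - Z l) * omega_over (Z l) (Zb l) a b))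
       \<partial>(PiM {3..N} (\<lambda>_. lborel)))"

definition transpT ::
  "(complex \<Rightarrow> complex \<Rightarrow> complex \<Rightarrow> complex \<Rightarrow> complex) \<Rightarrow> complex \<Rightarrow> complex \<Rightarrow> complex \<Rightarrow> complex \<Rightarrow> complex" where
  "transpT g a b c d = g a d c b"

definition D12 :: "nat \<Rightarrow> complex \<Rightarrow> complex \<Rightarrow> complex" where
  "D12 N z1 z2 =
     - of_real (real N * (real N - 1) / Zg N) *
     of_real ((cmod (z1 - cnj z1))\<^sup>2 * (cmod (z2 - cnj z2))\<^sup>2 * (cmod (z1 - cnj z2))\<^sup>2) *
     exp (- 2 * of_real ((cmod z1)\<^sup>2) - 2 * of_real ((cmod z2)\<^sup>2)) *
     (1 / of_real (pi ^ (N - 2))) *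
     (\<integral>w. (\<Prod>l\<in>{3..N}. \<Prod>k\<in>{3..<l}.
              of_real ((cmod (w l - w k))\<^sup>2 * (cmod (w l - cnj (w k)))\<^sup>2)) *
          (\<Prod>j\<in>{3..N}. of_real ((cmod (z1 - cnj (w j)))\<^sup>2 * (cmod (z2 - cnj (w j)))\<^sup>2) *
              (of_real ((cmod (z1 - w j))\<^sup>2 * (cmod (z2 - w j))\<^sup>2) + (cnj z1 - cnj (w j)) * (z2 - w j)) *
              of_real ((cmod (w j - cnj (w j)))\<^sup>2) * exp (- 2 * of_real ((cmod (w j))\<^sup>2)))
       \<partial>(PiM {3..N} (\<lambda>_. lborel)))"

end

theory Submission
  imports Defs "HOL-Probability.Distributions" "Jordan_Normal_Form.Determinant"
begin

definition pb :: "(complex \<Rightarrow> complex) \<Rightarrow> bool" where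
  "pb f \<longleftrightarrow> (\<exists>C k. \<forall>w. cmod (f w) \<le> C * (1 + cmod w) ^ k)"

lemma pb_const[intro]: "pb (\<lambda>w. c)"
  unfolding pb_def by (rule exI[of _ "cmod c"], rule exI[of _ 0]) auto

lemma pb_id[intro]: "pb (\<lambda>w. w)"
  unfolding pb_def by (rule exI[of _ 1], rule exI[of _ 1]) auto

lemma pb_cnj[intro]: "pb (\<lambda>w. cnj w)"
  unfolding pb_def by (rule exI[of _ 1], rule exI[of _ 1]) auto

lemma pb_mult[intro]: assumes "pb f" "pb g" shows "pb (\<lambda>w. f w * g w)"
proof -
  obtain C k where f: "\<And>w. cmod (f w) \<le> C * (1 + cmod w) ^ k" using assms(1) unfolding pb_def by blast
  obtain D l where g: "\<And>w. cmod (g w) \<le> D * (1 + cmod w) ^ l" using assms(2) unfolding pb_def by blast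
  have "cmod (f w * g w) \<le> (C * D) * (1 + cmod w) ^ (k + l)" for w
  proof -
    have "cmod (f w * g w) = cmod (f w) * cmod (g w)" by (simp add: norm_mult)
    also have "\<dots> \<le> (C * (1 + cmod w) ^ k) * (D * (1 + cmod w) ^ l)"
      by (rule mult_mono[OF f g]) (use order_trans[OF norm_ge_zero f[of w]] in auto)
    also have "\<dots> = (C * D) * (1 + cmod w) ^ (k + l)" by (simp add: power_add)
    finally show ?thesis .
  qed
  then show ?thesis unfolding pb_def by blast
qed

lemma pb_add[intro]: assumes "pb f" "pb g" shows "pb (\<lambda>w. f w + g w)"
proof -
  obtain C k where f: "\<And>w. cmod (f w) \<le> C * (1 + cmod w) ^ k" using assms(1) unfolding pb_def by blast
  obtain D l where g: "\<And>w. cmod (g w) \<le> D * (1 + cmod w) ^ l" using assms(2) unfolding pb_def by blast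
  have C0: "C \<ge> 0" using f[of 0] by (smt (verit, best) norm_ge_zero power_one_right mult_cancel_left1 norm_zero one_power2 power_one)
  have D0: "D \<ge> 0" using g[of 0] by (smt (verit, best) norm_ge_zero power_one_right mult_cancel_left1 norm_zero one_power2 power_one)
  have "cmod (f w + g w) \<le> (C + D) * (1 + cmod w) ^ (k + l)" for w
  proof -
    have a: "(1 + cmod w) ^ k \<le> (1 + cmod w) ^ (k + l)" by (rule power_increasing) auto
    have b: "(1 + cmod w) ^ l \<le> (1 + cmod w) ^ (k + l)" by (rule power_increasing) auto
    have "cmod (f w + g w) \<le> cmod (f w) + cmod (g w)" by (rule norm_triangle_ineq)
    also have "\<dots> \<le> C * (1 + cmod w) ^ (k + l) + D * (1 + cmod w) ^ (k + l)"
      using f[of w] g[of w] mult_left_mono[OF a C0] mult_left_mono[OF b D0] by linarith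
    finally show ?thesis by (simp add: algebra_simps)
  qed
  then show ?thesis unfolding pb_def by blast
qed

lemma pb_diff[intro]: assumes "pb f" "pb g" shows "pb (\<lambda>w. f w - g w)"
proof -
  have "pb (\<lambda>w. (-1) * g w)" by (rule pb_mult[OF pb_const assms(2)])
  then have "pb (\<lambda>w. f w + (-1) * g w)" by (rule pb_add[OF assms(1)])
  then show ?thesis by simp
qed

lemma pb_power[intro]: assumes "pb f" shows "pb (\<lambda>w. f w ^ n)"
  by (induction n) (use assms in auto)

lemma pb_prod[intro]: assumes "\<And>i. i \<in> A \<Longrightarrow> pb (f i)" shows "pb (\<lambda>w. \<Prod>i\<in>A. f i w)"
proof (cases "finite A")
  case True
  then show ?thesis using assms by (induction A rule: finite_induct) auto
qed auto

lemma poly_gauss_bound: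
  fixes t :: real assumes "t \<ge> 0"
  shows "(1 + t) ^ k * exp (- 2 * t\<^sup>2) \<le> exp (real k ^ 2) * exp (- t\<^sup>2 / 2)"
proof -
  have "(1 + t) ^ k \<le> exp (real k * t)"
  proof (cases "k = 0")
    case False
    have "(1 + (real k * t) / real k) ^ k \<le> exp (real k * t)"
      by (rule exp_ge_one_plus_x_over_n_power_n) (use assms False in \<open>simp_all\<close>, metis assms le_minus_iff mult_nonneg_nonneg neg_le_0_iff_le of_nat_0_le_iff order_trans)
    then show ?thesis using False by simp
  qed simp
  also have "exp (real k * t) \<le> exp (real k ^ 2 + (3/2) * t\<^sup>2)"
  proof -
    have e: "(real k - t/2)^2 = real k ^ 2 - real k * t + t\<^sup>2/4" by (simp add: power2_eq_square algebra_simps)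
    have "0 \<le> (real k - t/2)^2" by simp
    have "0 \<le> t\<^sup>2" by simp
    have "real k * t \<le> real k ^ 2 + (3/2) * t\<^sup>2" using e \<open>0 \<le> (real k - t/2)^2\<close> \<open>0 \<le> t\<^sup>2\<close> by linarith
    then show ?thesis by simp
  qed
  finally have "(1 + t) ^ k * exp (- 2 * t\<^sup>2) \<le> exp (real k ^ 2 + (3/2) * t\<^sup>2) * exp (- 2 * t\<^sup>2)"
    by (rule mult_right_mono) simp
  also have "\<dots> = exp (real k ^ 2) * exp (- t\<^sup>2 / 2)"
    by (simp add: exp_add[symmetric] algebra_simps)
  finally show ?thesis .
qed

lemma integrable_gauss_complex: "integrable lborel (\<lambda>w::complex. exp (- (cmod w)\<^sup>2 / 2))"
proof -
  let ?g = "\<lambda>x::real. exp (- x\<^sup>2 / 2)"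
  have gi: "integrable lborel ?g"
  proof -
    have "integrable lborel (\<lambda>x. sqrt (2 * pi) * std_normal_density x)" by simp
    moreover have "(\<lambda>x. sqrt (2 * pi) * std_normal_density x) = ?g"
      by (auto simp: std_normal_density_def)
    ultimately show ?thesis by simp
  qed
  interpret P: product_sigma_finite "\<lambda>_::complex. (lborel :: real measure)"
    by (simp add: product_sigma_finite_def sigma_finite_lborel)
  have "integrable (Pi\<^sub>M Basis (\<lambda>_::complex. lborel)) (\<lambda>f. \<Prod>b\<in>Basis. ?g (f b))"
    by (rule P.product_integrable_prod) (use gi in auto)
  moreover have "(\<lambda>f. \<Prod>b\<in>(Basis::complex set). ?g (f b)) = (\<lambda>f. exp (- (cmod (\<Sum>b\<in>Basis. f b *\<^sub>R b))\<^sup>2 / 2))"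
  proof
    fix f :: "complex \<Rightarrow> real"
    have "(\<Sum>b\<in>(Basis::complex set). f b *\<^sub>R b) = Complex (f 1) (f \<i>)"
      by (simp add: Basis_complex_def complex_eq_iff)
    then show "(\<Prod>b\<in>(Basis::complex set). ?g (f b)) = exp (- (cmod (\<Sum>b\<in>Basis. f b *\<^sub>R b))\<^sup>2 / 2)"
      by (simp add: Basis_complex_def cmod_def exp_add[symmetric] add_divide_distrib)
  qed
  ultimately have "integrable (Pi\<^sub>M Basis (\<lambda>_::complex. lborel)) (\<lambda>f. exp (- (cmod (\<Sum>b\<in>Basis. f b *\<^sub>R b))\<^sup>2 / 2))"
    by simp
  then have "integrable (distr (Pi\<^sub>M Basis (\<lambda>_::complex. lborel)) borel (\<lambda>f. \<Sum>b\<in>Basis. f b *\<^sub>R b)) (\<lambda>w::complex. exp (- (cmod w)\<^sup>2 / 2))"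
    by (subst integrable_distr_eq) auto
  then show ?thesis by (simp add: lborel_eq[symmetric])
qed

lemma integrable_pg:
  assumes "pb P" "continuous_on UNIV P"
  shows "integrable lborel (\<lambda>w::complex. P w * exp (-2 * w * cnj w))"
proof -
  obtain C k where Pb: "\<And>w. cmod (P w) \<le> C * (1 + cmod w) ^ k" using assms(1) unfolding pb_def by blast
  have C0: "C \<ge> 0" using Pb[of 0] by (smt (verit) norm_ge_zero power_one_right mult_cancel_left1 norm_zero one_power2 power_one)
  have i: "integrable lborel (\<lambda>w::complex. (C * exp (real k ^ 2)) * exp (- (cmod w)\<^sup>2 / 2))"
    using integrable_gauss_complex by simp
  have m: "(\<lambda>w. P w * exp (-2 * w * cnj w)) \<in> borel_measurable lborel"
    unfolding measurable_lborel2 by (intro borel_measurable_continuous_onI continuous_intros assms(2))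
  have b: "norm (P w * exp (-2 * w * cnj w)) \<le> norm ((C * exp (real k ^ 2)) * exp (- (cmod w)\<^sup>2 / 2))" for w
  proof -
    have ex: "exp (-2 * w * cnj w) = complex_of_real (exp (-2 * (cmod w)\<^sup>2))"
    proof -
      have "-2 * w * cnj w = complex_of_real (-2 * (cmod w)\<^sup>2)"
        by (simp add: mult.assoc complex_norm_square[symmetric])
      then show ?thesis by (simp only: exp_of_real)
    qed
    have "norm (P w * exp (-2 * w * cnj w)) = cmod (P w) * exp (-2 * (cmod w)\<^sup>2)"
      unfolding ex norm_mult by simp
    also have "\<dots> \<le> C * (1 + cmod w) ^ k * exp (-2 * (cmod w)\<^sup>2)"
      by (rule mult_right_mono[OF Pb]) simp
    also have "\<dots> \<le> C * (exp (real k ^ 2) * exp (- (cmod w)\<^sup>2 / 2))"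
      using mult_left_mono[OF poly_gauss_bound[of "cmod w" k] C0] by (simp add: mult.assoc)
    also have "\<dots> = norm ((C * exp (real k ^ 2)) * exp (- (cmod w)\<^sup>2 / 2))"
      using C0 by simp
    finally show ?thesis .
  qed
  show ?thesis
    by (rule Bochner_Integration.integrable_bound[OF i m]) (use b in \<open>auto intro: AE_I2\<close>)
qed

definition vdm :: "nat \<Rightarrow> (nat \<Rightarrow> 'a::comm_ring_1) \<Rightarrow> 'a" where
  "vdm m Y = (\<Prod>b<m. \<Prod>a<b. (Y b - Y a))"

lemma vdm_Suc: "vdm (Suc m) Y = vdm m (\<lambda>i. Y (Suc i)) * (\<Prod>j<m. (Y (Suc j) - Y 0))"
proof -
  have "vdm (Suc m) Y = (\<Prod>b<m. \<Prod>a<Suc b. (Y (Suc b) - Y a))"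
    unfolding vdm_def by (subst prod.lessThan_Suc_shift) simp
  also have "\<dots> = (\<Prod>b<m. (Y (Suc b) - Y 0) * (\<Prod>a<b. (Y (Suc b) - Y (Suc a))))"
    by (subst prod.lessThan_Suc_shift) simp
  also have "\<dots> = vdm m (\<lambda>i. Y (Suc i)) * (\<Prod>j<m. (Y (Suc j) - Y 0))"
    unfolding vdm_def prod.distrib by simp
  finally show ?thesis .
qed

definition vmat :: "nat \<Rightarrow> (nat \<Rightarrow> 'a::comm_ring_1) \<Rightarrow> 'a mat" where
  "vmat m Y = mat m m (\<lambda>(i,j). Y i ^ j)"

definition umat :: "nat \<Rightarrow> 'a::comm_ring_1 \<Rightarrow> 'a mat" where
  "umat m c = mat m m (\<lambda>(k,j). (if k = j then 1 else 0) + (if Suc k = j then - c else 0))"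

lemma pl: "prod_list (map f [0..<m]) = (\<Prod>j<m. f j)"
  by (simp add: prod.distinct_set_conv_list[symmetric] atLeast0LessThan)

lemma det_umat: "Determinant.det (umat m c) = 1"
proof -
  have "Determinant.det (umat m c) = prod_list (diag_mat (umat m c))"
    by (rule det_upper_triangular) (auto simp: umat_def upper_triangular_def)
  also have "\<dots> = (\<Prod>j<m. 1)"
    unfolding diag_mat_def pl[symmetric] by (rule arg_cong[where f=prod_list]) (simp add: umat_def)
  finally show ?thesis by simp
qed
lemma vmat_umat: 
  assumes "i < m" "j < m"
  shows "(vmat m Y * umat m (Y 0)) $$ (i, j) = (if j = 0 then 1 else Y i ^ (j - 1) * (Y i - Y 0))"
proof -
  have "(vmat m Y * umat m (Y 0)) $$ (i, j) = (\<Sum>k\<in>{0..<m}. Y i ^ k * ((if k = j then 1 else 0) + (if Suc k = j then - Y 0 else 0)))"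
    using assms by (simp add: vmat_def umat_def scalar_prod_def)
  also have "\<dots> = (\<Sum>k\<in>{0..<m}. (if k = j then Y i ^ k else 0)) + (\<Sum>k\<in>{0..<m}. (if Suc k = j then - Y 0 * Y i ^ k else 0))"
    unfolding sum.distrib[symmetric] by (rule sum.cong) auto
  also have "(\<Sum>k\<in>{0..<m}. (if k = j then Y i ^ k else 0)) = Y i ^ j"
    using assms by (simp add: sum.delta')
  also have "(\<Sum>k\<in>{0..<m}. (if Suc k = j then - Y 0 * Y i ^ k else 0)) = (if j = 0 then 0 else - Y 0 * Y i ^ (j - 1))"
  proof (cases j)
    case (Suc j')
    have "(\<Sum>k\<in>{0..<m}. (if Suc k = j then - Y 0 * Y i ^ k else 0)) = (\<Sum>k\<in>{0..<m}. (if k = j' then - Y 0 * Y i ^ k else 0))"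
      by (rule sum.cong) (auto simp: Suc)
    also have "\<dots> = - Y 0 * Y i ^ j'" using assms Suc by (simp add: sum.delta')
    finally show ?thesis using Suc by simp
  qed simp
  also have "Y i ^ j + (if j = 0 then 0 else - Y 0 * Y i ^ (j - 1)) = (if j = 0 then 1 else Y i ^ (j - 1) * (Y i - Y 0))"
    by (cases j) (auto simp: algebra_simps)
  finally show ?thesis .
qed

definition dmat :: "nat \<Rightarrow> (nat \<Rightarrow> 'a::comm_ring_1) \<Rightarrow> 'a mat" where
  "dmat m d = mat m m (\<lambda>(i,j). if i = j then d i else 0)"

lemma det_dmat: "Determinant.det (dmat m d) = (\<Prod>j<m. d j)"
proof -
  have "Determinant.det (dmat m d) = prod_list (diag_mat (dmat m d))"
    by (rule det_upper_triangular) (auto simp: dmat_def upper_triangular_def)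
  also have "\<dots> = (\<Prod>j<m. d j)"
    unfolding diag_mat_def pl[symmetric] by (rule arg_cong[where f=prod_list]) (simp add: dmat_def)
  finally show ?thesis .
qed
lemma dmat_mult: "B \<in> carrier_mat m n \<Longrightarrow> i < m \<Longrightarrow> j < n \<Longrightarrow> (dmat m d * B) $$ (i,j) = d i * B $$ (i,j)"
proof -
  assume B: "B \<in> carrier_mat m n" and i: "i < m" and j: "j < n"
  have "(dmat m d * B) $$ (i,j) = (\<Sum>k\<in>{0..<m}. (if i = k then d i else 0) * B $$ (k, j))"
    using B i j by (simp add: dmat_def scalar_prod_def)
  also have "\<dots> = (\<Sum>k\<in>{0..<m}. (if i = k then d i * B $$ (k, j) else 0))"
    by (rule sum.cong) auto
  also have "\<dots> = d i * B $$ (i,j)" using i by (simp add: sum.delta)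
  finally show ?thesis .
qed
lemma det_vmat: "Determinant.det (vmat m Y) = vdm m Y"
proof (induction m arbitrary: Y)
  case 0
  then show ?case by (simp add: vmat_def vdm_def det_def)
next
  case (Suc m)
  let ?A = "vmat (Suc m) Y * umat (Suc m) (Y 0)"
  have car: "?A \<in> carrier_mat (Suc m) (Suc m)" by (intro mult_carrier_mat) (auto simp: vmat_def umat_def)
  have "Determinant.det (vmat (Suc m) Y) = det ?A"
  proof -
    have "Determinant.det ?A = Determinant.det (vmat (Suc m) Y) * Determinant.det (umat (Suc m) (Y 0))"
      by (rule det_mult) (auto simp: vmat_def umat_def)
    then show ?thesis by (simp add: det_umat)
  qed
  also have "\<dots> = (\<Sum>j<Suc m. ?A $$ (0, j) * cofactor ?A 0 j)"
    by (rule laplace_expansion_row[OF car]) simp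
  also have "\<dots> = cofactor ?A 0 0"
    by (subst sum.lessThan_Suc_shift) (simp add: vmat_umat)
  also have "\<dots> = Determinant.det (mat_delete ?A 0 0)" by (simp add: cofactor_def)
  also have "mat_delete ?A 0 0 = dmat m (\<lambda>j. Y (Suc j) - Y 0) * vmat m (\<lambda>i. Y (Suc i))"
  proof (rule eq_matI)
    have dA: "dim_row ?A = Suc m" "dim_col ?A = Suc m" using car by auto
    show "dim_row (mat_delete ?A 0 0) = dim_row (dmat m (\<lambda>j. Y (Suc j) - Y 0) * vmat m (\<lambda>i. Y (Suc i)))"
      using dA by (simp add: dmat_def)
    show "dim_col (mat_delete ?A 0 0) = dim_col (dmat m (\<lambda>j. Y (Suc j) - Y 0) * vmat m (\<lambda>i. Y (Suc i)))"
      using dA by (simp add: vmat_def)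
    fix i j assume ij: "i < dim_row (dmat m (\<lambda>j. Y (Suc j) - Y 0) * vmat m (\<lambda>i. Y (Suc i)))"
      "j < dim_col (dmat m (\<lambda>j. Y (Suc j) - Y 0) * vmat m (\<lambda>i. Y (Suc i)))"
    then have i: "i < m" and j: "j < m" by (auto simp: dmat_def vmat_def)
    have "mat_delete ?A 0 0 $$ (i, j) = ?A $$ (Suc i, Suc j)"
      using i j dA by (simp add: mat_delete_def)
    also have "\<dots> = Y (Suc i) ^ j * (Y (Suc i) - Y 0)"
      using i j by (simp add: vmat_umat)
    also have "\<dots> = (dmat m (\<lambda>j. Y (Suc j) - Y 0) * vmat m (\<lambda>i. Y (Suc i))) $$ (i, j)"
      by (subst dmat_mult[of _ m m]) (use i j in \<open>auto simp: vmat_def\<close>)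
    finally show "mat_delete ?A 0 0 $$ (i, j) = (dmat m (\<lambda>j. Y (Suc j) - Y 0) * vmat m (\<lambda>i. Y (Suc i))) $$ (i, j)" .
  qed
  also have "Determinant.det \<dots> = (\<Prod>j<m. Y (Suc j) - Y 0) * vdm m (\<lambda>i. Y (Suc i))"
  proof -
    have "Determinant.det (dmat m (\<lambda>j. Y (Suc j) - Y 0) * vmat m (\<lambda>i. Y (Suc i))) = Determinant.det (dmat m (\<lambda>j. Y (Suc j) - Y 0)) * Determinant.det (vmat m (\<lambda>i. Y (Suc i)))"
      by (rule det_mult) (auto simp: vmat_def dmat_def)
    then show ?thesis by (simp add: det_dmat Suc.IH)
  qed
  finally show ?case by (simp add: vdm_Suc)
qed

lemma vdm_perm: "vdm m Y = (\<Sum>\<sigma>\<in>{\<sigma>. \<sigma> permutes {..<m}}. of_int (sign \<sigma>) * (\<Prod>b<m. Y b ^ \<sigma> b))"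
proof -
  have "vdm m Y = Determinant.det (vmat m Y)" by (simp add: det_vmat)
  also have "\<dots> = (\<Sum>\<sigma>\<in>{\<sigma>. \<sigma> permutes {0..<m}}. of_int (sign \<sigma>) * (\<Prod>b=0..<m. vmat m Y $$ (b, \<sigma> b)))"
    by (rule det_def') (simp add: vmat_def)
  also have "\<dots> = (\<Sum>\<sigma>\<in>{\<sigma>. \<sigma> permutes {..<m}}. of_int (sign \<sigma>) * (\<Prod>b<m. Y b ^ \<sigma> b))"
  proof -
    have pi: "\<And>\<sigma> b. \<sigma> permutes {..<m} \<Longrightarrow> b < m \<Longrightarrow> \<sigma> b < m" by (metis lessThan_iff permutes_in_image)
    show ?thesis unfolding atLeast0LessThan
      by (intro sum.cong refl arg_cong2[where f="(*)"] prod.cong) (auto simp: vmat_def pi)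
  qed
  finally show ?thesis .
qed

definition Perm :: "nat \<Rightarrow> (nat \<Rightarrow> nat) set" where
  "Perm n = {\<sigma>. \<sigma> permutes {..<2*n}}"

definition pterm :: "(nat \<Rightarrow> nat \<Rightarrow> complex) \<Rightarrow> nat \<Rightarrow> (nat \<Rightarrow> nat) \<Rightarrow> complex" where
  "pterm h n \<sigma> = of_int (sign \<sigma>) * (\<Prod>i<n. h (\<sigma> (2*i)) (\<sigma> (2*i+1)))"

definition PS :: "(nat \<Rightarrow> nat \<Rightarrow> complex) \<Rightarrow> nat \<Rightarrow> complex" where
  "PS h n = (\<Sum>\<sigma>\<in>Perm n. pterm h n \<sigma>)"

definition TT :: "nat \<Rightarrow> (nat \<Rightarrow> nat \<Rightarrow> complex) \<Rightarrow> nat \<Rightarrow> nat \<Rightarrow> complex" where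
  "TT p h n a = (\<Sum>\<sigma>\<in>Perm n. if \<sigma> p = a then pterm h n \<sigma> else 0)"

lemma finite_Perm[simp]: "finite (Perm n)"
  unfolding Perm_def by (rule finite_permutations) simp

lemma Perm_permutation: "\<sigma> \<in> Perm n \<Longrightarrow> permutation \<sigma>"
  unfolding Perm_def by (auto intro: permutes_imp_permutation)

lemma Perm_lt: "\<sigma> \<in> Perm n \<Longrightarrow> b < 2*n \<Longrightarrow> \<sigma> b < 2*n"
  unfolding Perm_def by (metis lessThan_iff mem_Collect_eq permutes_in_image)

lemma Perm_inj: "\<sigma> \<in> Perm n \<Longrightarrow> \<sigma> x = \<sigma> y \<Longrightarrow> x = y"
  unfolding Perm_def by (metis mem_Collect_eq permutes_inj injD)

lemma sum_even_odd: "(\<Sum>p<2*(n::nat). F p) = (\<Sum>i<n. F (2*i) + F (2*i+1))"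
  by (induction n) (auto simp: algebra_simps)

lemma prod_even_odd: "(\<Prod>p<2*(n::nat). F p) = (\<Prod>i<n. F (2*i) * F (2*i+1))"
  by (induction n) (auto simp: algebra_simps)

definition tau :: "nat \<Rightarrow> nat \<Rightarrow> nat" where
  "tau i = Transposition.transpose 0 (2*i) \<circ> Transposition.transpose 1 (2*i+1)"

lemma tau_even: "tau i (2*k) = 2 * Transposition.transpose 0 i k"
  unfolding tau_def by (auto simp: Transposition.transpose_def; presburger)

lemma tau_odd: "tau i (2*k+1) = 2 * Transposition.transpose 0 i k + 1"
  unfolding tau_def by (auto simp: Transposition.transpose_def; presburger)

lemma permutation_tau: "permutation (tau i)"
  unfolding tau_def by (intro permutation_compose permutation_swap_id)

lemma tau_tau: "tau i (tau i x) = x"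
  unfolding tau_def by (auto simp: Transposition.transpose_def)

lemma tau_Perm: "i < n \<Longrightarrow> \<sigma> \<in> Perm n \<Longrightarrow> \<sigma> \<circ> tau i \<in> Perm n"
  unfolding Perm_def tau_def
  by (auto intro!: permutes_compose permutes_swap_id)

lemma sign_tau: "sign (tau i) = 1"
proof -
  have "sign (tau i) = sign (Transposition.transpose (0::nat) (2*i)) * sign (Transposition.transpose (1::nat) (2*i+1))"
    unfolding tau_def by (rule sign_compose) (rule permutation_swap_id)+
  also have "\<dots> = 1" by (cases "i = 0") (auto simp: sign_swap_id)
  finally show ?thesis .
qed

lemma pterm_tau:
  assumes "i < n" "\<sigma> \<in> Perm n"
  shows "pterm h n (\<sigma> \<circ> tau i) = pterm h n \<sigma>"
proof -
  have s: "sign (\<sigma> \<circ> tau i) = sign \<sigma>"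
    using assms by (simp add: sign_compose Perm_permutation sign_tau permutation_tau)
  have "(\<Prod>k<n. h ((\<sigma> \<circ> tau i) (2*k)) ((\<sigma> \<circ> tau i) (2*k+1)))
      = (\<Prod>k<n. (\<lambda>k. h (\<sigma> (2*k)) (\<sigma> (2*k+1))) (Transposition.transpose 0 i k))"
    using tau_odd[of i] by (simp add: tau_even)
  also have "\<dots> = (\<Prod>k<n. h (\<sigma> (2*k)) (\<sigma> (2*k+1)))"
    using prod.permute[of "Transposition.transpose 0 i" "{..<n}" "\<lambda>k. h (\<sigma> (2*k)) (\<sigma> (2*k+1))"] assms
    by (simp add: permutes_swap_id comp_def)
  finally show ?thesis unfolding pterm_def s by simp
qed

lemma TT_block:
  assumes "i < n"
  shows "TT (2*i) h n a = TT 0 h n a" "TT (2*i+1) h n a = TT 1 h n a"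
proof -
  have t0: "tau i 0 = 2*i" and t1: "tau i (Suc 0) = Suc (2*i)"
    using tau_even[of i 0] tau_odd[of i 0] by (auto simp: Transposition.transpose_def)
  show "TT (2*i) h n a = TT 0 h n a"
    unfolding TT_def
    by (rule sum.reindex_bij_witness[where i="\<lambda>\<sigma>. \<sigma> \<circ> tau i" and j="\<lambda>\<sigma>. \<sigma> \<circ> tau i"])
      (use assms tau_Perm[unfolded comp_def] in \<open>auto simp: comp_def tau_tau pterm_tau[unfolded comp_def] t0\<close>)
  show "TT (2*i+1) h n a = TT 1 h n a"
    unfolding TT_def
    by (rule sum.reindex_bij_witness[where i="\<lambda>\<sigma>. \<sigma> \<circ> tau i" and j="\<lambda>\<sigma>. \<sigma> \<circ> tau i"])
      (use assms tau_Perm[unfolded comp_def] in \<open>auto simp: comp_def tau_tau pterm_tau[unfolded comp_def] t1\<close>)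
qed

lemma Perm_surj: assumes "\<sigma> \<in> Perm n" "a < 2*n" obtains p where "p < 2*n" "\<sigma> p = a"
proof -
  have "\<sigma> ` {..<2*n} = {..<2*n}" using assms(1) unfolding Perm_def by (simp add: permutes_image)
  then have "a \<in> \<sigma> ` {..<2*n}" using assms(2) by simp
  then show ?thesis using that by auto
qed

lemma sum_unique_pos:
  assumes "\<sigma> \<in> Perm n" "a < 2*n"
  shows "(\<Sum>p<2*n. if \<sigma> p = a then x else 0) = x"
proof -
  obtain p0 where p0: "p0 < 2*n" "\<sigma> p0 = a" using Perm_surj[OF assms] .
  have "(\<Sum>p<2*n. if \<sigma> p = a then x else 0) = (\<Sum>p<2*n. if p = p0 then x else 0)"
    by (rule sum.cong) (use p0 Perm_inj[OF assms(1)] in auto)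
  also have "\<dots> = x" using p0 by simp
  finally show ?thesis .
qed

lemma PS_split: assumes "a < 2*n" shows "PS h n = (\<Sum>p<2*n. TT p h n a)"
proof -
  have "PS h n = (\<Sum>\<sigma>\<in>Perm n. \<Sum>p<2*n. if \<sigma> p = a then pterm h n \<sigma> else 0)"
    unfolding PS_def by (intro sum.cong refl) (simp add: sum_unique_pos[OF _ assms])
  also have "\<dots> = (\<Sum>p<2*n. TT p h n a)"
    unfolding TT_def by (rule sum.swap)
  finally show ?thesis .
qed

lemma block_sym: assumes "a < 2*n" shows "PS h n = of_nat n * (TT 0 h n a + TT 1 h n a)"
proof -
  have "PS h n = (\<Sum>i<n. TT (2*i) h n a + TT (2*i+1) h n a)"
    unfolding PS_split[OF assms] by (rule sum_even_odd)
  also have "\<dots> = (\<Sum>i<n. TT 0 h n a + TT 1 h n a)"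
    by (rule sum.cong) (auto simp: TT_block(1) TT_block(2)[simplified])
  finally show ?thesis by simp
qed

lemma PS_noninj:
  assumes "a < 2*n" "c < 2*n" "a \<noteq> c"
  shows "PS (\<lambda>p q. l (if p = a then c else p) (if q = a then c else q)) n = 0"
proof -
  let ?f = "\<lambda>p. if p = a then c else p"
  let ?h = "\<lambda>p q. l (?f p) (?f q)"
  let ?t = "Transposition.transpose a c"
  have ft: "?f (?t x) = ?f x" for x by (auto simp: Transposition.transpose_def)
  have tP: "\<sigma> \<in> Perm n \<Longrightarrow> ?t \<circ> \<sigma> \<in> Perm n" for \<sigma>
    unfolding Perm_def using assms by (auto intro!: permutes_compose permutes_swap_id)
  have st: "\<sigma> \<in> Perm n \<Longrightarrow> sign (?t \<circ> \<sigma>) = - sign \<sigma>" for \<sigma>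
    using assms by (simp add: sign_compose permutation_swap_id Perm_permutation sign_swap_id)
  have pt: "\<sigma> \<in> Perm n \<Longrightarrow> pterm ?h n (?t \<circ> \<sigma>) = - pterm ?h n \<sigma>" for \<sigma>
  proof -
    assume s: "\<sigma> \<in> Perm n"
    have "(\<Prod>i<n. ?h ((?t \<circ> \<sigma>) (2*i)) ((?t \<circ> \<sigma>) (2*i+1))) = (\<Prod>i<n. ?h (\<sigma> (2*i)) (\<sigma> (2*i+1)))"
      by (simp only: comp_apply ft)
    then show ?thesis unfolding pterm_def st[OF s] by simp
  qed
  have "PS ?h n = (\<Sum>\<sigma>\<in>Perm n. - pterm ?h n \<sigma>)"
    unfolding PS_def
    by (rule sum.reindex_bij_witness[where i="\<lambda>\<sigma>. ?t \<circ> \<sigma>" and j="\<lambda>\<sigma>. ?t \<circ> \<sigma>"])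
      (auto simp: tP pt comp_def[symmetric] o_assoc[symmetric] transpose_comp_involutory)
  also have "\<dots> = - PS ?h n" by (simp add: PS_def sum_negf)
  finally show ?thesis by simp
qed

definition RR :: "(nat \<Rightarrow> nat \<Rightarrow> complex) \<Rightarrow> nat \<Rightarrow> (nat \<Rightarrow> nat) \<Rightarrow> complex" where
  "RR l m \<sigma> = (\<Prod>i<m. l (\<sigma> (2*i+2)) (\<sigma> (2*i+3)))"

definition QS :: "(nat \<Rightarrow> nat \<Rightarrow> complex) \<Rightarrow> nat \<Rightarrow> nat \<Rightarrow> nat \<Rightarrow> complex" where
  "QS l m b a = (\<Sum>\<sigma>\<in>Perm (Suc m). if \<sigma> 0 = b \<and> \<sigma> 1 = a then of_int (sign \<sigma>) * RR l m \<sigma> else 0)"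

lemma pterm_Suc: "pterm h (Suc m) \<sigma> = of_int (sign \<sigma>) * h (\<sigma> 0) (\<sigma> 1) * RR h m \<sigma>"
  unfolding pterm_def RR_def prod.lessThan_Suc_shift by (simp add: algebra_simps numeral_3_eq_3)

lemma sum_if_eq:
  assumes "finite S" "x \<in> S"
  shows "(\<Sum>b\<in>S. if x = b \<and> P then F b else 0) = (if P then F x else 0)"
  using assms by (cases P) (auto simp: sum.delta)

lemma sumA:
  assumes "c < 2 * Suc m"
  shows "(\<Sum>b<2 * Suc m. l c b * QS l m b a) =
     (\<Sum>\<sigma>\<in>Perm (Suc m). if \<sigma> 1 = a then of_int (sign \<sigma>) * l c (\<sigma> 0) * RR l m \<sigma> else 0)"
proof -
  have "(\<Sum>b<2 * Suc m. l c b * QS l m b a) =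
     (\<Sum>b<2 * Suc m. \<Sum>\<sigma>\<in>Perm (Suc m). if \<sigma> 0 = b \<and> \<sigma> 1 = a then of_int (sign \<sigma>) * l c b * RR l m \<sigma> else 0)"
    unfolding QS_def sum_distrib_left by (intro sum.cong refl) (auto simp: algebra_simps)
  also have "\<dots> = (\<Sum>\<sigma>\<in>Perm (Suc m). \<Sum>b<2 * Suc m. if \<sigma> 0 = b \<and> \<sigma> 1 = a then of_int (sign \<sigma>) * l c b * RR l m \<sigma> else 0)"
    by (rule sum.swap)
  also have "\<dots> = (\<Sum>\<sigma>\<in>Perm (Suc m). if \<sigma> 1 = a then of_int (sign \<sigma>) * l c (\<sigma> 0) * RR l m \<sigma> else 0)"
    by (intro sum.cong refl sum_if_eq) (use Perm_lt[of _ "Suc m" 0] in auto)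
  finally show ?thesis .
qed

lemma sumB:
  shows "(\<Sum>b<2 * Suc m. l b c * QS l m b a) =
     (\<Sum>\<sigma>\<in>Perm (Suc m). if \<sigma> 1 = a then of_int (sign \<sigma>) * l (\<sigma> 0) c * RR l m \<sigma> else 0)"
proof -
  have "(\<Sum>b<2 * Suc m. l b c * QS l m b a) =
     (\<Sum>b<2 * Suc m. \<Sum>\<sigma>\<in>Perm (Suc m). if \<sigma> 0 = b \<and> \<sigma> 1 = a then of_int (sign \<sigma>) * l b c * RR l m \<sigma> else 0)"
    unfolding QS_def sum_distrib_left by (intro sum.cong refl) (auto simp: algebra_simps)
  also have "\<dots> = (\<Sum>\<sigma>\<in>Perm (Suc m). \<Sum>b<2 * Suc m. if \<sigma> 0 = b \<and> \<sigma> 1 = a then of_int (sign \<sigma>) * l b c * RR l m \<sigma> else 0)"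
    by (rule sum.swap)
  also have "\<dots> = (\<Sum>\<sigma>\<in>Perm (Suc m). if \<sigma> 1 = a then of_int (sign \<sigma>) * l (\<sigma> 0) c * RR l m \<sigma> else 0)"
    by (intro sum.cong refl sum_if_eq) (use Perm_lt[of _ "Suc m" 0] in auto)
  finally show ?thesis .
qed

lemma RR_f:
  assumes "\<sigma> \<in> Perm (Suc m)" "\<sigma> 0 = a \<or> \<sigma> 1 = a"
  shows "RR (\<lambda>p q. l (if p = a then c else p) (if q = a then c else q)) m \<sigma> = RR l m \<sigma>"
proof -
  have ne: "\<sigma> k \<noteq> a" if "k \<ge> 2" for k
    using assms Perm_inj[OF assms(1), of k 0] Perm_inj[OF assms(1), of k 1] that by auto
  show ?thesis unfolding RR_def by (intro prod.cong refl) (auto simp: ne)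
qed

lemma TT1_eq:
  shows "TT 1 (\<lambda>p q. l (if p = a then c else p) (if q = a then c else q)) (Suc m) a =
     (\<Sum>\<sigma>\<in>Perm (Suc m). if \<sigma> 1 = a then of_int (sign \<sigma>) * l (\<sigma> 0) c * RR l m \<sigma> else 0)"
  unfolding TT_def
proof (intro sum.cong refl)
  fix \<sigma> assume s: "\<sigma> \<in> Perm (Suc m)"
  show "(if \<sigma> 1 = a then pterm (\<lambda>p q. l (if p = a then c else p) (if q = a then c else q)) (Suc m) \<sigma> else 0) =
        (if \<sigma> 1 = a then of_int (sign \<sigma>) * l (\<sigma> 0) c * RR l m \<sigma> else 0)"
  proof (cases "\<sigma> 1 = a")
    case True
    have "\<sigma> 0 \<noteq> a" using True Perm_inj[OF s, of 0 1] by auto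
    then show ?thesis using True RR_f[OF s] unfolding pterm_Suc by simp
  qed simp
qed

lemma TT0_eq:
  shows "TT 0 (\<lambda>p q. l (if p = a then c else p) (if q = a then c else q)) (Suc m) a =
     (\<Sum>\<sigma>\<in>Perm (Suc m). if \<sigma> 0 = a then of_int (sign \<sigma>) * l c (\<sigma> 1) * RR l m \<sigma> else 0)"
  unfolding TT_def
proof (intro sum.cong refl)
  fix \<sigma> assume s: "\<sigma> \<in> Perm (Suc m)"
  show "(if \<sigma> 0 = a then pterm (\<lambda>p q. l (if p = a then c else p) (if q = a then c else q)) (Suc m) \<sigma> else 0) =
        (if \<sigma> 0 = a then of_int (sign \<sigma>) * l c (\<sigma> 1) * RR l m \<sigma> else 0)"
  proof (cases "\<sigma> 0 = a")
    case True
    have "\<sigma> 1 \<noteq> a" using True Perm_inj[OF s, of 0 1] by auto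
    then show ?thesis using True RR_f[OF s] unfolding pterm_Suc by simp
  qed simp
qed

lemma swap01:
  "(\<Sum>\<sigma>\<in>Perm (Suc m). if \<sigma> 0 = a then of_int (sign \<sigma>) * l c (\<sigma> 1) * RR l m \<sigma> else 0) =
   - (\<Sum>\<sigma>\<in>Perm (Suc m). if \<sigma> 1 = a then of_int (sign \<sigma>) * l c (\<sigma> 0) * RR l m \<sigma> else 0)"
proof -
  let ?t = "Transposition.transpose (0::nat) 1"
  have tP: "\<sigma> \<in> Perm (Suc m) \<Longrightarrow> \<sigma> \<circ> ?t \<in> Perm (Suc m)" for \<sigma>
    unfolding Perm_def by (auto intro!: permutes_compose permutes_swap_id)
  have st: "\<sigma> \<in> Perm (Suc m) \<Longrightarrow> sign (\<sigma> \<circ> ?t) = - sign \<sigma>" for \<sigma>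
    by (simp add: sign_compose permutation_swap_id Perm_permutation sign_swap_id)
  have Rt: "RR l m (\<sigma> \<circ> ?t) = RR l m \<sigma>" for \<sigma>
    unfolding RR_def by (intro prod.cong refl) (auto simp: Transposition.transpose_def)
  have t0: "(\<sigma> \<circ> ?t) 0 = \<sigma> 1" and t1: "(\<sigma> \<circ> ?t) 1 = \<sigma> 0" for \<sigma> :: "nat \<Rightarrow> nat"
    by (auto simp: Transposition.transpose_def)
  have "(\<Sum>\<sigma>\<in>Perm (Suc m). if \<sigma> 0 = a then of_int (sign \<sigma>) * l c (\<sigma> 1) * RR l m \<sigma> else 0) =
        (\<Sum>\<sigma>\<in>Perm (Suc m). - (if \<sigma> 1 = a then of_int (sign \<sigma>) * l c (\<sigma> 0) * RR l m \<sigma> else 0))"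
  proof -
    have heq: "- (if (\<sigma> \<circ> ?t) 1 = a then of_int (sign (\<sigma> \<circ> ?t)) * l c ((\<sigma> \<circ> ?t) 0) * RR l m (\<sigma> \<circ> ?t) else 0) =
      (if \<sigma> 0 = a then of_int (sign \<sigma>) * l c (\<sigma> 1) * RR l m \<sigma> else 0)" if s: "\<sigma> \<in> Perm (Suc m)" for \<sigma>
      unfolding t0 t1 st[OF s] Rt by simp
    show ?thesis
      apply (rule sum.reindex_bij_witness[where i="\<lambda>\<sigma>. \<sigma> \<circ> ?t" and j="\<lambda>\<sigma>. \<sigma> \<circ> ?t"])
      apply (simp add: o_assoc[symmetric] transpose_comp_involutory)
      apply (erule tP)
      apply (simp add: o_assoc[symmetric] transpose_comp_involutory)
      apply (erule tP)
      apply (erule heq)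
      done
  qed
  then show ?thesis by (simp add: sum_negf)
qed

lemma main_alg:
  assumes "a < 2 * Suc m" "c < 2 * Suc m"
  shows "of_nat (Suc m) * (\<Sum>b<2 * Suc m. (l c b - l b c) * QS l m b a) = - (if c = a then PS l (Suc m) else 0)"
proof -
  let ?h = "\<lambda>p q. l (if p = a then c else p) (if q = a then c else q)"
  have "(\<Sum>b<2 * Suc m. (l c b - l b c) * QS l m b a) = (\<Sum>b<2 * Suc m. l c b * QS l m b a) - (\<Sum>b<2 * Suc m. l b c * QS l m b a)"
    by (simp add: algebra_simps sum_subtractf)
  also have "\<dots> = - (TT 0 ?h (Suc m) a + TT 1 ?h (Suc m) a)"
    unfolding sumA[OF assms(2)] sumB TT0_eq TT1_eq swap01 by simp
  finally have eq: "(\<Sum>b<2 * Suc m. (l c b - l b c) * QS l m b a) = - (TT 0 ?h (Suc m) a + TT 1 ?h (Suc m) a)" .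
  have b: "PS ?h (Suc m) = of_nat (Suc m) * (TT 0 ?h (Suc m) a + TT 1 ?h (Suc m) a)"
    by (rule block_sym[OF assms(1)])
  have *: "of_nat (Suc m) * (\<Sum>b<2 * Suc m. (l c b - l b c) * QS l m b a) = - PS ?h (Suc m)"
    unfolding eq b by (simp only: mult_minus_right)
  show ?thesis
  proof (cases "c = a")
    case True
    have "?h = l" using True by (intro ext) auto
    then show ?thesis using * True by simp
  next
    case False
    then show ?thesis using * PS_noninj[OF assms(1,2)] by simp
  qed
qed

lemma inv_some:
  fixes A :: "'a::field mat"
  assumes A: "A \<in> carrier_mat n n" and inv: "invertible_mat A"
  obtains B where "mat_inverse A = Some B" "B * A = 1\<^sub>m n" "B \<in> carrier_mat n n"
proof (cases "mat_inverse A")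
  case None
  obtain B where AB: "A * B = 1\<^sub>m (dim_row A)" and BA: "B * A = 1\<^sub>m (dim_row B)"
    using inv unfolding invertible_mat_def inverts_mat_def by blast
  have rB: "dim_row B = n"
    using arg_cong[OF BA, of dim_col] A by auto
  have cB: "dim_col B = n"
    using arg_cong[OF AB, of dim_col] A by auto
  have "A \<in> Units (ring_mat TYPE('a) n ())"
    unfolding Units_def ring_mat_def using A AB BA rB cB by (auto intro!: bexI[of _ B])
  moreover have "A \<notin> Units (ring_mat TYPE('a) n ())" by (rule mat_inverse(1)[OF A None])
  ultimately show ?thesis by blast
next
  case (Some B)
  then show ?thesis using mat_inverse(2)[OF A Some] that by blast
qed

lemma mult_entry:
  assumes "A \<in> carrier_mat n p" "C \<in> carrier_mat p q" "i < n" "j < q"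
  shows "(A * C) $$ (i, j) = (\<Sum>c<p. A $$ (i, c) * C $$ (c, j))"
  using assms by (auto simp: scalar_prod_def atLeast0LessThan intro!: sum.cong)

lemma kappa_alg:
  assumes sm: "\<And>j k. skew_moment x y j k = l j k - l k j"
    and inv: "invertible_mat (skew_moment_mat (Suc m) x y)"
  shows "PS l (Suc m) * kappa_over (Suc m) u v x y =
     - of_nat (Suc m) * (\<Sum>j<2 * Suc m. \<Sum>k<2 * Suc m. u ^ j * QS l m j k * v ^ k)"
proof -
  define nn where "nn = 2 * Suc m"
  let ?n = nn
  let ?M = "skew_moment_mat (Suc m) x y"
  let ?Q = "mat ?n ?n (\<lambda>(b,a). QS l m b a)"
  have M: "?M \<in> carrier_mat ?n ?n" by (simp add: skew_moment_mat_def nn_def)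
  obtain B where Bi: "mat_inverse ?M = Some B" and BM: "B * ?M = 1\<^sub>m ?n" and B: "B \<in> carrier_mat ?n ?n"
    using inv_some[OF M inv] by blast
  have Q: "?Q \<in> carrier_mat ?n ?n" by simp
  have Mdef: "?M = mat nn nn (\<lambda>(j,k). l j k - l k j)"
    unfolding skew_moment_mat_def sm nn_def ..
  have nz: "(of_nat (Suc m)::complex) \<noteq> 0" by (simp only: of_nat_eq_0_iff)
  have MQ: "(?M * ?Q) $$ (c, k) = - (if c = k then PS l (Suc m) else 0) / of_nat (Suc m)"
    if "c < ?n" "k < ?n" for c k
  proof -
    have eq: "(?M * ?Q) $$ (c, k) = (\<Sum>b<?n. (l c b - l b c) * QS l m b k)"
      unfolding Mdef using that by (simp add: scalar_prod_def atLeast0LessThan)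
    have h: "of_nat (Suc m) * (\<Sum>b<?n. (l c b - l b c) * QS l m b k) = - (if c = k then PS l (Suc m) else 0)"
      using main_alg[of k m c l] that unfolding nn_def by simp
    show ?thesis unfolding eq using h nz by (metis nonzero_mult_div_cancel_left)
  qed
  have Bjk: "PS l (Suc m) * B $$ (j, k) = - of_nat (Suc m) * QS l m j k" if "j < ?n" "k < ?n" for j k
  proof -
    have "?Q $$ (j, k) = (B * ?M * ?Q) $$ (j, k)" using that by (simp add: BM)
    also have "\<dots> = (B * (?M * ?Q)) $$ (j, k)" by (simp add: assoc_mult_mat[OF B M Q])
    also have "\<dots> = (\<Sum>c<?n. B $$ (j, c) * (?M * ?Q) $$ (c, k))"
      by (rule mult_entry[OF B mult_carrier_mat[OF M Q] that])
    also have "\<dots> = (\<Sum>c<?n. B $$ (j, c) * (- (if c = k then PS l (Suc m) else 0) / of_nat (Suc m)))"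
      using that by (intro sum.cong refl) (simp add: MQ)
    also have "\<dots> = (\<Sum>c<?n. if c = k then - B $$ (j, k) * PS l (Suc m) / of_nat (Suc m) else 0)"
      by (intro sum.cong refl) auto
    also have "\<dots> = - B $$ (j, k) * PS l (Suc m) / of_nat (Suc m)"
      using that by simp
    finally have "QS l m j k = - B $$ (j, k) * PS l (Suc m) / of_nat (Suc m)" using that by simp
    moreover have nz': "(1 + of_nat m :: complex) \<noteq> 0" using nz by simp
    ultimately have "QS l m j k + complex_of_nat m * QS l m j k = - (PS l (Suc m) * B $$ (j, k))"
      by (simp add: field_simps)
    then have "PS l (Suc m) * B $$ (j, k) = - (QS l m j k + complex_of_nat m * QS l m j k)"
      by (subst (asm) equation_minus_iff) simp
    then show ?thesis by (simp add: algebra_simps)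
  qed
  have "PS l (Suc m) * kappa_over (Suc m) u v x y = (\<Sum>j<?n. \<Sum>k<?n. u ^ j * (PS l (Suc m) * B $$ (j, k)) * v ^ k)"
  proof -
    have "kappa_over (Suc m) u v x y = (\<Sum>j<nn. \<Sum>k<nn. u ^ j * B $$ (j, k) * v ^ k)"
      unfolding kappa_over_def Let_def Bi option.sel nn_def ..
    then show ?thesis by (simp add: sum_distrib_left algebra_simps)
  qed
  also have "\<dots> = (\<Sum>j<?n. \<Sum>k<?n. u ^ j * (- of_nat (Suc m) * QS l m j k) * v ^ k)"
    by (intro sum.cong refl) (simp add: Bjk)
  also have "\<dots> = - of_nat (Suc m) * (\<Sum>j<?n. \<Sum>k<?n. u ^ j * QS l m j k * v ^ k)"
    by (simp add: sum_distrib_left algebra_simps sum_negf)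
  finally show ?thesis unfolding nn_def .
qed

definition Wt :: "complex \<Rightarrow> complex \<Rightarrow> complex \<Rightarrow> complex" where
  "Wt x y w = (w - cnj w) * omega_over w (cnj w) x y"

definition ll :: "complex \<Rightarrow> complex \<Rightarrow> nat \<Rightarrow> nat \<Rightarrow> complex" where
  "ll x y j k = (1 / of_real pi) * (\<integral>w. w ^ j * cnj w ^ k * Wt x y w \<partial>lborel)"

lemma int_Wt: "integrable lborel (\<lambda>w. w ^ a * cnj w ^ b * Wt x y w)"
proof -
  let ?P = "\<lambda>w. w ^ a * cnj w ^ b * ((w - cnj w) * (w - y) * (cnj w - x) * (1 + (w - x) * (cnj w - y)))"
  have "pb ?P" by (intro pb_mult pb_power pb_diff pb_add pb_id pb_cnj pb_const)
  moreover have "continuous_on UNIV ?P" by (intro continuous_intros)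
  ultimately have "integrable lborel (\<lambda>w. ?P w * exp (-2 * w * cnj w))" by (rule integrable_pg)
  moreover have "(\<lambda>w. ?P w * exp (-2 * w * cnj w)) = (\<lambda>w. w ^ a * cnj w ^ b * Wt x y w)"
    by (auto simp: Wt_def omega_over_def algebra_simps)
  ultimately show ?thesis by simp
qed

lemma skew_moment_ll: "skew_moment x y j k = ll x y j k - ll x y k j"
proof -
  have "skew_moment x y j k = (1 / of_real pi) * (\<integral>w. w ^ j * cnj w ^ k * Wt x y w - w ^ k * cnj w ^ j * Wt x y w \<partial>lborel)"
    unfolding skew_moment_def Wt_def by (simp add: algebra_simps)
  also have "\<dots> = ll x y j k - ll x y k j"
    unfolding ll_def by (subst Bochner_Integration.integral_diff[OF int_Wt int_Wt]) (simp add: algebra_simps)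
  finally show ?thesis .
qed

interpretation PC: product_sigma_finite "\<lambda>_::nat. (lborel :: complex measure)"
  by (simp add: product_sigma_finite_def sigma_finite_lborel)

lemma tensor_sum:
  fixes g :: "'s \<Rightarrow> nat \<Rightarrow> complex \<Rightarrow> complex"
  assumes "finite S" "finite I" "\<And>s i. s \<in> S \<Longrightarrow> i \<in> I \<Longrightarrow> integrable lborel (g s i)"
  shows "(\<integral>w. (\<Sum>s\<in>S. c s * (\<Prod>i\<in>I. g s i (w i))) \<partial>PiM I (\<lambda>_. lborel)) =
         (\<Sum>s\<in>S. c s * (\<Prod>i\<in>I. \<integral>t. g s i t \<partial>lborel))"
proof -
  have int: "integrable (PiM I (\<lambda>_. lborel)) (\<lambda>w. \<Prod>i\<in>I. g s i (w i))" if "s \<in> S" for s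
    by (rule PC.product_integrable_prod) (use assms that in auto)
  have "(\<integral>w. (\<Sum>s\<in>S. c s * (\<Prod>i\<in>I. g s i (w i))) \<partial>PiM I (\<lambda>_. lborel)) =
        (\<Sum>s\<in>S. \<integral>w. c s * (\<Prod>i\<in>I. g s i (w i)) \<partial>PiM I (\<lambda>_. lborel))"
    by (rule Bochner_Integration.integral_sum) (use int in auto)
  also have "\<dots> = (\<Sum>s\<in>S. c s * (\<Prod>i\<in>I. \<integral>t. g s i t \<partial>lborel))"
    by (intro sum.cong refl) (simp add: PC.product_integral_prod assms)
  finally show ?thesis .
qed

lemma vdm_SucSuc: "vdm (Suc (Suc k)) Y = vdm k Y * (\<Prod>a<k. Y k - Y a) * (\<Prod>a<Suc k. Y (Suc k) - Y a)"
  by (simp add: vdm_def)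

lemma vdm_pairs: "vdm (2*n) Y = (\<Prod>i<n. Y (2*i+1) - Y (2*i)) *
   (\<Prod>i<n. \<Prod>j<i. ((Y (2*i) - Y (2*j)) * (Y (2*i) - Y (2*j+1))) * ((Y (2*i+1) - Y (2*j)) * (Y (2*i+1) - Y (2*j+1))))"
proof (induction n)
  case 0
  then show ?case by (simp add: vdm_def)
next
  case (Suc n)
  have "vdm (2 * Suc n) Y = vdm (2*n) Y * (\<Prod>a<2*n. Y (2*n) - Y a) * ((Y (2*n+1) - Y (2*n)) * (\<Prod>a<2*n. Y (2*n+1) - Y a))"
    using vdm_SucSuc[of "2*n" Y] by (simp add: mult.commute)
  also have "(\<Prod>a<2*n. Y (2*n) - Y a) = (\<Prod>j<n. (Y (2*n) - Y (2*j)) * (Y (2*n) - Y (2*j+1)))"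
    by (rule prod_even_odd)
  also have "(\<Prod>a<2*n. Y (2*n+1) - Y a) = (\<Prod>j<n. (Y (2*n+1) - Y (2*j)) * (Y (2*n+1) - Y (2*j+1)))"
    by (rule prod_even_odd)
  finally show ?case unfolding Suc.IH prod.lessThan_Suc[of _ n] prod.distrib by (simp only: mult_ac)
qed

lemma of_real_cmod_sq: "complex_of_real ((cmod z)\<^sup>2) = z * cnj z"
  by (rule complex_norm_square)

lemma pairf: "complex_of_real ((cmod (a - b))\<^sup>2 * (cmod (a - cnj b))\<^sup>2) =
   ((b - a) * (b - cnj a)) * ((cnj b - a) * (cnj b - cnj a))"
  unfolding of_real_mult of_real_cmod_sq by (simp add: algebra_simps)

lemma diagf: "complex_of_real ((cmod (a - cnj a))\<^sup>2) * omega_over a (cnj a) x y = (cnj a - a) * Wt x y a"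
  unfolding of_real_cmod_sq Wt_def by (simp add: algebra_simps)

definition Yz :: "(nat \<Rightarrow> complex) \<Rightarrow> nat \<Rightarrow> complex" where
  "Yz w b = (if even b then w (b div 2) else cnj (w (b div 2)))"

lemma Z_integrand:
  "(\<Prod>k<n. \<Prod>j<k. of_real ((cmod (w j - w k))\<^sup>2 * (cmod (w j - cnj (w k)))\<^sup>2)) *
   (\<Prod>j<n. of_real ((cmod (w j - cnj (w j)))\<^sup>2) * omega_over (w j) (cnj (w j)) x y)
   = vdm (2*n) (Yz w) * (\<Prod>j<n. Wt x y (w j))"
proof -
  have Y0: "Yz w (2*i) = w i" and Y1: "Yz w (2*i+1) = cnj (w i)" and Y2: "Yz w (Suc (2*i)) = cnj (w i)" for i
    by (auto simp: Yz_def)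
  have "vdm (2*n) (Yz w) = (\<Prod>i<n. cnj (w i) - w i) *
   (\<Prod>i<n. \<Prod>j<i. ((w i - w j) * (w i - cnj (w j))) * ((cnj (w i) - w j) * (cnj (w i) - cnj (w j))))"
    unfolding vdm_pairs Y0 Y1 ..
  moreover have "(\<Prod>k<n. \<Prod>j<k. of_real ((cmod (w j - w k))\<^sup>2 * (cmod (w j - cnj (w k)))\<^sup>2)) =
     (\<Prod>i<n. \<Prod>j<i. ((w i - w j) * (w i - cnj (w j))) * ((cnj (w i) - w j) * (cnj (w i) - cnj (w j))))"
    unfolding pairf ..
  moreover have "(\<Prod>j<n. of_real ((cmod (w j - cnj (w j)))\<^sup>2) * omega_over (w j) (cnj (w j)) x y) =
      (\<Prod>i<n. cnj (w i) - w i) * (\<Prod>j<n. Wt x y (w j))"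
    unfolding diagf prod.distrib ..
  ultimately show ?thesis by (simp only: mult_ac)
qed

lemma int_ll: "(\<integral>t. t ^ j * cnj t ^ k * Wt x y t \<partial>lborel) = of_real pi * ll x y j k"
  unfolding ll_def by simp

lemma Z_over_PS: "Z_over n x y = PS (ll x y) n"
proof -
  let ?g = "\<lambda>\<sigma> i t. t ^ \<sigma> (2*i) * cnj t ^ \<sigma> (2*i+1) * Wt x y t"
  have pw: "(\<Prod>k<n. \<Prod>j<k. of_real ((cmod (w j - w k))\<^sup>2 * (cmod (w j - cnj (w k)))\<^sup>2)) *
      (\<Prod>j<n. of_real ((cmod (w j - cnj (w j)))\<^sup>2) * omega_over (w j) (cnj (w j)) x y)
      = (\<Sum>\<sigma>\<in>Perm n. of_int (sign \<sigma>) * (\<Prod>i\<in>{..<n}. ?g \<sigma> i (w i)))" for w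
  proof -
    have Y0: "Yz w (2*i) = w i" and Y1: "Yz w (2*i+1) = cnj (w i)" for i
      by (auto simp: Yz_def)
    have "vdm (2*n) (Yz w) * (\<Prod>j<n. Wt x y (w j)) =
        (\<Sum>\<sigma>\<in>Perm n. of_int (sign \<sigma>) * (\<Prod>b<2*n. Yz w b ^ \<sigma> b) * (\<Prod>j<n. Wt x y (w j)))"
      unfolding vdm_perm Perm_def sum_distrib_right ..
    also have "\<dots> = (\<Sum>\<sigma>\<in>Perm n. of_int (sign \<sigma>) * (\<Prod>i\<in>{..<n}. ?g \<sigma> i (w i)))"
    proof (intro sum.cong refl)
      fix \<sigma>
      have "(\<Prod>b<2*n. Yz w b ^ \<sigma> b) = (\<Prod>i<n. w i ^ \<sigma> (2*i) * cnj (w i) ^ \<sigma> (2*i+1))"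
        unfolding prod_even_odd Y0 Y1 ..
      then show "of_int (sign \<sigma>) * (\<Prod>b<2*n. Yz w b ^ \<sigma> b) * (\<Prod>j<n. Wt x y (w j)) =
          of_int (sign \<sigma>) * (\<Prod>i\<in>{..<n}. ?g \<sigma> i (w i))"
        by (simp add: prod.distrib mult.assoc)
    qed
    finally show ?thesis unfolding Z_integrand .
  qed
  have "Z_over n x y = (1 / of_real (pi ^ n)) *
      (\<integral>w. (\<Sum>\<sigma>\<in>Perm n. of_int (sign \<sigma>) * (\<Prod>i\<in>{..<n}. ?g \<sigma> i (w i))) \<partial>PiM {..<n} (\<lambda>_. lborel))"
    unfolding Z_over_def pw ..
  also have "\<dots> = (1 / of_real (pi ^ n)) * (\<Sum>\<sigma>\<in>Perm n. of_int (sign \<sigma>) * (\<Prod>i\<in>{..<n}. \<integral>t. ?g \<sigma> i t \<partial>lborel))"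
    by (subst tensor_sum) (auto intro: int_Wt)
  also have "\<dots> = (1 / of_real (pi ^ n)) * (\<Sum>\<sigma>\<in>Perm n. of_int (sign \<sigma>) * (of_real pi ^ n * (\<Prod>i<n. ll x y (\<sigma> (2*i)) (\<sigma> (2*i+1)))))"
    by (simp add: int_ll prod.distrib)
  also have "\<dots> = PS (ll x y) n"
    unfolding PS_def pterm_def by (simp add: sum_distrib_left algebra_simps)
  finally show ?thesis .
qed

lemma brk: fixes A B C D :: complex shows "(A * B) * (C * D) + B * C = B * C * (1 + A * D)"
  by (simp add: algebra_simps)

lemma poly_id: fixes t tb p pb q qb E :: complex shows "((p - tb) * (pb - t)) * ((q - tb) * (qb - t)) * (((p - t) * (pb - tb)) * ((q - t) * (qb - tb)) + (pb - tb) * (q - t)) * ((t - tb) * (tb - t)) * E = (((t - q) * (t - pb)) * ((tb - q) * (tb - pb))) * (tb - t) * ((t - tb) * ((t - qb) * (tb - p) * (1 + (t - p) * (tb - qb)) * E))"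
proof -
  have e1: "(p - t) * (qb - tb) = (t - p) * (tb - qb)" by (simp add: algebra_simps)
  have "((p - t) * (pb - tb)) * ((q - t) * (qb - tb)) + (pb - tb) * (q - t) = (pb - tb) * (q - t) * (1 + (t - p) * (tb - qb))"
    using brk[of "p - t" "pb - tb" "q - t" "qb - tb"] e1 by simp
  moreover have "pb - t = - (t - pb)" "q - tb = - (tb - q)" "pb - tb = - (tb - pb)" "q - t = - (t - q)" "p - tb = - (tb - p)" "qb - t = - (t - qb)"
    by simp_all
  ultimately show ?thesis by (simp only: mult_minus_left mult_minus_right minus_minus mult_ac)
qed

lemma jfactor:
  "of_real ((cmod (z1 - cnj t))\<^sup>2 * (cmod (z2 - cnj t))\<^sup>2) *
     (of_real ((cmod (z1 - t))\<^sup>2 * (cmod (z2 - t))\<^sup>2) + (cnj z1 - cnj t) * (z2 - t)) *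
     of_real ((cmod (t - cnj t))\<^sup>2) * exp (- 2 * of_real ((cmod t)\<^sup>2))
   = (((t - z2) * (t - cnj z1)) * ((cnj t - z2) * (cnj t - cnj z1))) * (cnj t - t) * Wt z1 (cnj z2) t"
proof -
  have ex: "exp (- 2 * (t * cnj t)) = exp (-2 * t * cnj t)"
    by (simp add: mult.assoc)
  show ?thesis
    unfolding of_real_mult of_real_cmod_sq ex Wt_def omega_over_def
    using poly_id[of z1 "cnj t" "cnj z1" t z2 "cnj z2" "exp (-2 * t * cnj t)"]
    by simp
qed

lemma pairf2: "complex_of_real ((cmod (a - b))\<^sup>2 * (cmod (a - cnj b))\<^sup>2) =
   ((a - b) * (a - cnj b)) * ((cnj a - b) * (cnj a - cnj b))"
  unfolding of_real_mult of_real_cmod_sq by (simp add: algebra_simps)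

lemma shift3: "(\<Prod>l\<in>{3..<(k::nat)+3}. F l) = (\<Prod>i<k. F (i + 3))"
proof (induction k)
  case (Suc k)
  have "{3..<Suc k + 3} = insert (k+3) {3..<k+3}" by auto
  then show ?case using Suc by (simp add: mult.commute)
qed simp

lemma shift3': "(\<Prod>l\<in>{3..Suc (Suc m)}. F l) = (\<Prod>i<m. F (i + 3))"
proof -
  have "{3..Suc (Suc m)} = {3..<m+3}" by auto
  then show ?thesis using shift3 by simp
qed

definition YJ :: "complex \<Rightarrow> complex \<Rightarrow> (nat \<Rightarrow> complex) \<Rightarrow> nat \<Rightarrow> complex" where
  "YJ u v w b = (if b = 0 then u else if b = 1 then v else if even b then w (b div 2 + 2) else cnj (w (b div 2 + 2)))"

lemma YJ_simps: "YJ u v w 0 = u" "YJ u v w (Suc 0) = v" "YJ u v w (2 * Suc i) = w (i + 3)"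
   "YJ u v w (2 * Suc i + 1) = cnj (w (i + 3))" "YJ u v w (Suc (2 * Suc i)) = cnj (w (i + 3))"
  by (auto simp: YJ_def numeral_3_eq_3)

lemma YJ_simps2: "YJ u v w (Suc (Suc (2*i))) = w (i + 3)" "YJ u v w (Suc (Suc (Suc (2*i)))) = cnj (w (i + 3))"
  by (auto simp: YJ_def numeral_3_eq_3)

definition DIntg :: "nat \<Rightarrow> complex \<Rightarrow> complex \<Rightarrow> (nat \<Rightarrow> complex) \<Rightarrow> complex" where
  "DIntg N z1 z2 w = (\<Prod>l\<in>{3..N}. \<Prod>k\<in>{3..<l}.
              of_real ((cmod (w l - w k))\<^sup>2 * (cmod (w l - cnj (w k)))\<^sup>2)) *
          (\<Prod>j\<in>{3..N}. of_real ((cmod (z1 - cnj (w j)))\<^sup>2 * (cmod (z2 - cnj (w j)))\<^sup>2) *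
              (of_real ((cmod (z1 - w j))\<^sup>2 * (cmod (z2 - w j))\<^sup>2) + (cnj z1 - cnj (w j)) * (z2 - w j)) *
              of_real ((cmod (w j - cnj (w j)))\<^sup>2) * exp (- 2 * of_real ((cmod (w j))\<^sup>2)))"

lemma J_vdm:
  "(cnj z1 - z2) * DIntg (Suc (Suc m)) z1 z2 w = vdm (2 * Suc m) (YJ z2 (cnj z1) w) * (\<Prod>i<m. Wt z1 (cnj z2) (w (i+3)))"
proof -
  let ?u = z2 and ?v = "cnj z1"
  let ?Y = "YJ ?u ?v w"
  let ?P = "\<lambda>a b. ((a - b) * (a - cnj b)) * ((cnj a - b) * (cnj a - cnj b))"
  let ?F = "\<lambda>t. ((t - ?u) * (t - ?v)) * ((cnj t - ?u) * (cnj t - ?v))"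
  have D: "DIntg (Suc (Suc m)) z1 z2 w = (\<Prod>i<m. \<Prod>j<i. ?P (w (i+3)) (w (j+3))) *
      ((\<Prod>i<m. ?F (w (i+3))) * (\<Prod>i<m. cnj (w (i+3)) - w (i+3)) * (\<Prod>i<m. Wt z1 (cnj z2) (w (i+3))))"
    unfolding DIntg_def shift3' shift3 pairf2 jfactor prod.distrib ..
  have V1: "(\<Prod>i<Suc m. ?Y (2*i+1) - ?Y (2*i)) = (?v - ?u) * (\<Prod>i<m. cnj (w (i+3)) - w (i+3))"
    unfolding prod.lessThan_Suc_shift by (simp add: YJ_simps YJ_simps2)
  have V2: "(\<Prod>i<Suc m. \<Prod>j<i. ((?Y (2*i) - ?Y (2*j)) * (?Y (2*i) - ?Y (2*j+1))) * ((?Y (2*i+1) - ?Y (2*j)) * (?Y (2*i+1) - ?Y (2*j+1))))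
      = (\<Prod>i<m. ?F (w (i+3)) * (\<Prod>j<i. ?P (w (i+3)) (w (j+3))))"
    unfolding prod.lessThan_Suc_shift by (simp add: YJ_simps YJ_simps2)
  have V: "vdm (2 * Suc m) ?Y = (?v - ?u) * (\<Prod>i<m. cnj (w (i+3)) - w (i+3)) * (\<Prod>i<m. ?F (w (i+3)) * (\<Prod>j<i. ?P (w (i+3)) (w (j+3))))"
    unfolding vdm_pairs V1 V2 ..
  show ?thesis
    unfolding V D prod.distrib by (simp only: mult_ac)
qed

lemma J_int:
  "(cnj z1 - z2) * (\<integral>w. DIntg (Suc (Suc m)) z1 z2 w \<partial>PiM {3..Suc (Suc m)} (\<lambda>_. lborel)) =
   of_real pi ^ m * (\<Sum>\<sigma>\<in>Perm (Suc m). of_int (sign \<sigma>) * z2 ^ \<sigma> 0 * cnj z1 ^ \<sigma> 1 * RR (ll z1 (cnj z2)) m \<sigma>)"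
proof -
  let ?I = "{3..Suc (Suc m)}"
  let ?g = "\<lambda>\<sigma> l t. t ^ \<sigma> (2*l-4) * cnj t ^ \<sigma> (2*l-3) * Wt z1 (cnj z2) t"
  let ?c = "\<lambda>\<sigma>. of_int (sign \<sigma>) * z2 ^ \<sigma> 0 * cnj z1 ^ \<sigma> 1"
  have pw: "(cnj z1 - z2) * DIntg (Suc (Suc m)) z1 z2 w = (\<Sum>\<sigma>\<in>Perm (Suc m). ?c \<sigma> * (\<Prod>l\<in>?I. ?g \<sigma> l (w l)))" for w
  proof -
    have "(cnj z1 - z2) * DIntg (Suc (Suc m)) z1 z2 w =
       (\<Sum>\<sigma>\<in>Perm (Suc m). of_int (sign \<sigma>) * (\<Prod>b<2 * Suc m. YJ z2 (cnj z1) w b ^ \<sigma> b) * (\<Prod>i<m. Wt z1 (cnj z2) (w (i+3))))"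
      unfolding J_vdm vdm_perm Perm_def sum_distrib_right ..
    also have "\<dots> = (\<Sum>\<sigma>\<in>Perm (Suc m). ?c \<sigma> * (\<Prod>l\<in>?I. ?g \<sigma> l (w l)))"
    proof (intro sum.cong refl)
      fix \<sigma>
      have a: "(\<Prod>b<2 * Suc m. YJ z2 (cnj z1) w b ^ \<sigma> b) =
          z2 ^ \<sigma> 0 * cnj z1 ^ \<sigma> 1 * (\<Prod>i<m. w (i+3) ^ \<sigma> (2*i+2) * cnj (w (i+3)) ^ \<sigma> (2*i+3))"
        unfolding prod_even_odd prod.lessThan_Suc_shift by (simp add: YJ_simps YJ_simps2 numeral_3_eq_3)
      have b: "(\<Prod>l\<in>?I. ?g \<sigma> l (w l)) = (\<Prod>i<m. w (i+3) ^ \<sigma> (2*i+2) * cnj (w (i+3)) ^ \<sigma> (2*i+3) * Wt z1 (cnj z2) (w (i+3)))"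
        unfolding shift3' by (intro prod.cong refl) (simp add: numeral_3_eq_3 algebra_simps)
      show "of_int (sign \<sigma>) * (\<Prod>b<2 * Suc m. YJ z2 (cnj z1) w b ^ \<sigma> b) * (\<Prod>i<m. Wt z1 (cnj z2) (w (i+3))) =
          ?c \<sigma> * (\<Prod>l\<in>?I. ?g \<sigma> l (w l))"
        unfolding a b by (simp only: prod.distrib mult_ac)
    qed
    finally show ?thesis .
  qed
  have "(cnj z1 - z2) * (\<integral>w. DIntg (Suc (Suc m)) z1 z2 w \<partial>PiM ?I (\<lambda>_. lborel)) =
      (\<integral>w. (cnj z1 - z2) * DIntg (Suc (Suc m)) z1 z2 w \<partial>PiM ?I (\<lambda>_. lborel))"
    by simp
  also have "\<dots> = (\<integral>w. (\<Sum>\<sigma>\<in>Perm (Suc m). ?c \<sigma> * (\<Prod>l\<in>?I. ?g \<sigma> l (w l))) \<partial>PiM ?I (\<lambda>_. lborel))"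
    unfolding pw ..
  also have "\<dots> = (\<Sum>\<sigma>\<in>Perm (Suc m). ?c \<sigma> * (\<Prod>l\<in>?I. \<integral>t. ?g \<sigma> l t \<partial>lborel))"
    by (rule tensor_sum) (auto intro: int_Wt)
  also have "\<dots> = (\<Sum>\<sigma>\<in>Perm (Suc m). ?c \<sigma> * (of_real pi ^ m * RR (ll z1 (cnj z2)) m \<sigma>))"
  proof (intro sum.cong refl arg_cong2[where f="(*)"])
    fix \<sigma>
    have "(\<Prod>l\<in>?I. \<integral>t. ?g \<sigma> l t \<partial>lborel) = (\<Prod>i<m. of_real pi * ll z1 (cnj z2) (\<sigma> (2*i+2)) (\<sigma> (2*i+3)))"
      unfolding shift3' int_ll by (intro prod.cong refl) (simp add: numeral_3_eq_3 algebra_simps)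
    then show "(\<Prod>l\<in>?I. \<integral>t. ?g \<sigma> l t \<partial>lborel) = of_real pi ^ m * RR (ll z1 (cnj z2)) m \<sigma>"
      unfolding RR_def by (simp add: prod.distrib)
  qed
  also have "\<dots> = of_real pi ^ m * (\<Sum>\<sigma>\<in>Perm (Suc m). ?c \<sigma> * RR (ll z1 (cnj z2)) m \<sigma>)"
    by (simp add: sum_distrib_left algebra_simps)
  finally show ?thesis .
qed

lemma QS_sum:
  "(\<Sum>j<2 * Suc m. \<Sum>k<2 * Suc m. u ^ j * QS l m j k * v ^ k) =
   (\<Sum>\<sigma>\<in>Perm (Suc m). of_int (sign \<sigma>) * u ^ \<sigma> 0 * v ^ \<sigma> 1 * RR l m \<sigma>)"
proof -
  have "(\<Sum>j<2 * Suc m. \<Sum>k<2 * Suc m. u ^ j * QS l m j k * v ^ k) =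
    (\<Sum>j<2 * Suc m. \<Sum>k<2 * Suc m. \<Sum>\<sigma>\<in>Perm (Suc m). if \<sigma> 0 = j \<and> \<sigma> 1 = k then of_int (sign \<sigma>) * u ^ j * v ^ k * RR l m \<sigma> else 0)"
    unfolding QS_def sum_distrib_left sum_distrib_right by (intro sum.cong refl) auto
  also have "\<dots> = (\<Sum>\<sigma>\<in>Perm (Suc m). \<Sum>j<2 * Suc m. \<Sum>k<2 * Suc m. if \<sigma> 0 = j \<and> \<sigma> 1 = k then of_int (sign \<sigma>) * u ^ j * v ^ k * RR l m \<sigma> else 0)"
    by (simp only: sum.swap[of _ "Perm (Suc m)"])
  also have "\<dots> = (\<Sum>\<sigma>\<in>Perm (Suc m). of_int (sign \<sigma>) * u ^ \<sigma> 0 * v ^ \<sigma> 1 * RR l m \<sigma>)"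
  proof (intro sum.cong refl)
    fix \<sigma> assume s: "\<sigma> \<in> Perm (Suc m)"
    have l0: "\<sigma> 0 < 2 * Suc m" and l1: "\<sigma> 1 < 2 * Suc m" using Perm_lt[OF s] by auto
    have "(\<Sum>j<2 * Suc m. \<Sum>k<2 * Suc m. if \<sigma> 0 = j \<and> \<sigma> 1 = k then of_int (sign \<sigma>) * u ^ j * v ^ k * RR l m \<sigma> else 0) =
        (\<Sum>j<2 * Suc m. if \<sigma> 0 = j then of_int (sign \<sigma>) * u ^ j * v ^ \<sigma> 1 * RR l m \<sigma> else 0)"
    proof (intro sum.cong refl)
      fix j
      show "(\<Sum>k<2 * Suc m. if \<sigma> 0 = j \<and> \<sigma> 1 = k then of_int (sign \<sigma>) * u ^ j * v ^ k * RR l m \<sigma> else 0) =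
          (if \<sigma> 0 = j then of_int (sign \<sigma>) * u ^ j * v ^ \<sigma> 1 * RR l m \<sigma> else 0)"
        using l1 by (cases "\<sigma> 0 = j") (simp_all add: sum.delta)
    qed
    also have "\<dots> = of_int (sign \<sigma>) * u ^ \<sigma> 0 * v ^ \<sigma> 1 * RR l m \<sigma>"
      using l0 by (simp add: sum.delta)
    finally show "(\<Sum>j<2 * Suc m. \<Sum>k<2 * Suc m. if \<sigma> 0 = j \<and> \<sigma> 1 = k then of_int (sign \<sigma>) * u ^ j * v ^ k * RR l m \<sigma> else 0) =
        of_int (sign \<sigma>) * u ^ \<sigma> 0 * v ^ \<sigma> 1 * RR l m \<sigma>" .
  qed
  finally show ?thesis .
qed

lemma fin_alg:
  fixes n1 n2 g A E P I Z k c1 c2 :: complex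
  assumes "Z * k = - n1 * (c2 * I) / P"
  shows "- (n2 * n1 / g) * (A * (- (c1 * c2))) * E * (1 / P) * I = - (n2 * Z / g) * A * c1 * E * k"
proof -
  have "- (n2 * Z / g) * A * c1 * E * k = - (n2 / g) * A * c1 * E * (Z * k)"
    by (simp add: divide_inverse algebra_simps)
  also have "\<dots> = - (n2 * n1 / g) * (A * (- (c1 * c2))) * E * (1 / P) * I"
    unfolding assms by (simp add: divide_inverse algebra_simps)
  finally show ?thesis by simp
qed

lemma second_conj:
  assumes inv: "invertible_mat (skew_moment_mat (Suc m) z1 (cnj z2))"
  shows "D12 (Suc (Suc m)) z1 z2 =
           - (of_nat (Suc (Suc m)) * Z_over (Suc m) z1 (cnj z2) / of_real (Zg (Suc (Suc m)))) *
           of_real ((cmod (z1 - cnj z1))\<^sup>2 * (cmod (z2 - cnj z2))\<^sup>2) * (cnj z2 - z1) *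
           exp (- 2 * of_real ((cmod z1)\<^sup>2) - 2 * of_real ((cmod z2)\<^sup>2)) *
           kappa_over (Suc m) z2 (cnj z1) z1 (cnj z2)"
proof -
  let ?N = "Suc (Suc m)"
  let ?I = "\<integral>w. DIntg ?N z1 z2 w \<partial>PiM {3..?N} (\<lambda>_. lborel)"
  let ?l = "ll z1 (cnj z2)"
  let ?S = "\<Sum>j<2 * Suc m. \<Sum>k<2 * Suc m. z2 ^ j * QS ?l m j k * cnj z1 ^ k"
  have pinz: "(of_real pi :: complex) \<noteq> 0" by simp
  have J: "(cnj z1 - z2) * ?I = of_real pi ^ m * ?S"
    unfolding J_int QS_sum ..
  have K: "PS ?l (Suc m) * kappa_over (Suc m) z2 (cnj z1) z1 (cnj z2) = - of_nat (Suc m) * ?S"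
    by (rule kappa_alg[OF skew_moment_ll inv])
  have ZK: "Z_over (Suc m) z1 (cnj z2) * kappa_over (Suc m) z2 (cnj z1) z1 (cnj z2) =
      - of_nat (Suc m) * ((cnj z1 - z2) * ?I) / of_real pi ^ m"
    unfolding Z_over_PS K J using pinz by simp
  have D: "D12 ?N z1 z2 = - of_real (real ?N * (real ?N - 1) / Zg ?N) *
     of_real ((cmod (z1 - cnj z1))\<^sup>2 * (cmod (z2 - cnj z2))\<^sup>2 * (cmod (z1 - cnj z2))\<^sup>2) *
     exp (- 2 * of_real ((cmod z1)\<^sup>2) - 2 * of_real ((cmod z2)\<^sup>2)) *
     (1 / of_real (pi ^ m)) * ?I"
    unfolding D12_def DIntg_def by simp
  have A3: "complex_of_real ((cmod (z1 - cnj z2))\<^sup>2) = - ((cnj z2 - z1) * (cnj z1 - z2))"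
    unfolding of_real_cmod_sq by (simp add: algebra_simps)
  have "real ?N - 1 = real (Suc m)" by simp
  then have c: "complex_of_real (real ?N * (real ?N - 1) / Zg ?N) = of_nat ?N * of_nat (Suc m) / of_real (Zg ?N)"
    by simp
  show ?thesis
    unfolding D c of_real_mult A3 unfolding of_real_power
    by (rule fin_alg[OF ZK])
qed

lemma pairf3: "(a - b) * (cnj a - cnj b) * (a - cnj b) * (cnj a - b) =
   complex_of_real ((cmod (b - a))\<^sup>2 * (cmod (b - cnj a))\<^sup>2)"
  unfolding of_real_mult of_real_cmod_sq by (simp add: algebra_simps)

lemma j2S: fixes c d t tb W :: complex
  shows "(c - t) * (d - tb) * (c - tb) * (d - t) * ((t - tb) * (tb - t) * W) =
    ((t - c) * (t - d)) * ((tb - c) * (tb - d)) * (tb - t) * ((t - tb) * W)"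
proof -
  have "c - t = - (t - c)" "d - tb = - (tb - d)" "c - tb = - (tb - c)" "d - t = - (t - d)" by simp_all
  then show ?thesis by (simp only: mult_minus_left mult_minus_right minus_minus mult_ac)
qed

lemma D11_integrand:
  assumes N: "N \<ge> 2"
  shows "(let Z = (\<lambda>l. if l = 2 then z2 else w l);
                 Zb = (\<lambda>l. if l = 2 then cnj z1 else cnj (w l))
             in (\<Prod>l\<in>{2..N}. \<Prod>j\<in>{2..<l}.
                    (Z j - Z l) * (Zb j - Zb l) * (Z j - Zb l) * (Zb j - Z l)) *
                (\<Prod>l\<in>{2..N}. (Z l - Zb l) * (Zb l - Z l) * omega_over (Z l) (Zb l) z1 (cnj z2)))
     = ((z2 - cnj z1) * (cnj z1 - z2) * omega_over z2 (cnj z1) z1 (cnj z2)) * DIntg N z1 z2 w"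
proof -
  define Z where "Z = (\<lambda>l. if l = 2 then z2 else w l)"
  define Zb where "Zb = (\<lambda>l. if l = 2 then cnj z1 else cnj (w l))"
  let ?K = "(z2 - cnj z1) * (cnj z1 - z2) * omega_over z2 (cnj z1) z1 (cnj z2)"
  let ?A = "\<lambda>l. \<Prod>j\<in>{2..<l}. (Z j - Z l) * (Zb j - Zb l) * (Z j - Zb l) * (Zb j - Z l)"
  let ?B = "\<lambda>l. (Z l - Zb l) * (Zb l - Z l) * omega_over (Z l) (Zb l) z1 (cnj z2)"
  let ?j2 = "\<lambda>t. (z2 - t) * (cnj z1 - cnj t) * (z2 - cnj t) * (cnj z1 - t)"
  let ?P = "\<lambda>l. \<Prod>k\<in>{3..<l}. complex_of_real ((cmod (w l - w k))\<^sup>2 * (cmod (w l - cnj (w k)))\<^sup>2)"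
  let ?jf = "\<lambda>t. of_real ((cmod (z1 - cnj t))\<^sup>2 * (cmod (z2 - cnj t))\<^sup>2) *
     (of_real ((cmod (z1 - t))\<^sup>2 * (cmod (z2 - t))\<^sup>2) + (cnj z1 - cnj t) * (z2 - t)) *
     of_real ((cmod (t - cnj t))\<^sup>2) * exp (- 2 * of_real ((cmod t)\<^sup>2))"
  have s2: "{2..N} = insert 2 {3..N}" using N by auto
  have L: "(let Z = (\<lambda>l. if l = 2 then z2 else w l);
                 Zb = (\<lambda>l. if l = 2 then cnj z1 else cnj (w l))
             in (\<Prod>l\<in>{2..N}. \<Prod>j\<in>{2..<l}.
                    (Z j - Z l) * (Zb j - Zb l) * (Z j - Zb l) * (Zb j - Z l)) *
                (\<Prod>l\<in>{2..N}. (Z l - Zb l) * (Zb l - Z l) * omega_over (Z l) (Zb l) z1 (cnj z2)))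
     = (\<Prod>l\<in>{2..N}. ?A l) * (\<Prod>l\<in>{2..N}. ?B l)"
    unfolding Let_def Z_def Zb_def ..
  have A2: "?A 2 = 1" by simp
  have Al: "?A l = ?j2 (w l) * ?P l" if l: "l \<in> {3..N}" for l
  proof -
    have s2l: "{2..<l} = insert 2 {3..<l}" using l by auto
    have "?A l = ((Z 2 - Z l) * (Zb 2 - Zb l) * (Z 2 - Zb l) * (Zb 2 - Z l)) *
        (\<Prod>j\<in>{3..<l}. (Z j - Z l) * (Zb j - Zb l) * (Z j - Zb l) * (Zb j - Z l))"
      unfolding s2l by (subst prod.insert) auto
    also have "(\<Prod>j\<in>{3..<l}. (Z j - Z l) * (Zb j - Zb l) * (Z j - Zb l) * (Zb j - Z l)) = ?P l"
    proof (rule prod.cong[OF refl])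
      fix j assume j: "j \<in> {3..<l}"
      then have "Z j = w j" "Zb j = cnj (w j)" "Z l = w l" "Zb l = cnj (w l)" using l by (auto simp: Z_def Zb_def)
      then show "(Z j - Z l) * (Zb j - Zb l) * (Z j - Zb l) * (Zb j - Z l) =
          complex_of_real ((cmod (w l - w j))\<^sup>2 * (cmod (w l - cnj (w j)))\<^sup>2)"
        using pairf3[of "w j" "w l"] by simp
    qed
    also have "(Z 2 - Z l) * (Zb 2 - Zb l) * (Z 2 - Zb l) * (Zb 2 - Z l) = ?j2 (w l)"
      using l by (auto simp: Z_def Zb_def)
    finally show ?thesis .
  qed
  have B2: "?B 2 = ?K" by (simp add: Z_def Zb_def)
  have jB: "?j2 (w l) * ?B l = ?jf (w l)" if l: "l \<in> {3..N}" for l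
  proof -
    have "Z l = w l" "Zb l = cnj (w l)" using l by (auto simp: Z_def Zb_def)
    then have "?j2 (w l) * ?B l = ?j2 (w l) * ((w l - cnj (w l)) * (cnj (w l) - w l) * omega_over (w l) (cnj (w l)) z1 (cnj z2))"
      by simp
    also have "\<dots> = ?jf (w l)"
      unfolding jfactor Wt_def by (rule j2S)
    finally show ?thesis .
  qed
  have "(\<Prod>l\<in>{2..N}. ?A l) * (\<Prod>l\<in>{2..N}. ?B l) = (\<Prod>l\<in>{3..N}. ?A l) * (?K * (\<Prod>l\<in>{3..N}. ?B l))"
    unfolding s2 by (simp add: A2 B2)
  also have "(\<Prod>l\<in>{3..N}. ?A l) = (\<Prod>l\<in>{3..N}. ?j2 (w l) * ?P l)"
    by (rule prod.cong[OF refl]) (rule Al)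
  also have "(\<Prod>l\<in>{3..N}. ?j2 (w l) * ?P l) * (?K * (\<Prod>l\<in>{3..N}. ?B l)) =
      ?K * ((\<Prod>l\<in>{3..N}. ?P l) * (\<Prod>l\<in>{3..N}. ?j2 (w l) * ?B l))"
    unfolding prod.distrib by (simp only: mult_ac)
  also have "(\<Prod>l\<in>{3..N}. ?j2 (w l) * ?B l) = (\<Prod>l\<in>{3..N}. ?jf (w l))"
    by (rule prod.cong[OF refl]) (rule jB)
  finally show ?thesis unfolding L DIntg_def .
qed

lemma scal_gen: fixes p P q Q X Y W :: complex
  assumes h1: "1 - (p - q)*(P - Q) \<noteq> 0" and h2: "(p - Q)*(P - q) \<noteq> 0"
  shows "- ((p - P)*(P - p) * ((q - Q)*(Q - q)) * ((p - Q)*(P - q))) * (X*Y*W) = (p - P) * (q - Q) * X / ((1 - (p - q)*(P - Q)) * ((p - Q)*(P - q))) * ((p - Q) * (Q - p) * Y * ((q - P) * (P - q) * ((q - Q) * (P - p) * (1 + (q - p) * (P - Q)) * W)))"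
proof -
  define s where "s = (p - q)*(P - Q)"
  define a where "a = (p - Q)*(P - q)"
  have e1: "1 + (q - p) * (P - Q) = 1 - s" unfolding s_def by (simp add: algebra_simps)
  have e2: "(p - Q) * (Q - p) * Y * ((q - P) * (P - q) * ((q - Q) * (P - p) * (1 - s) * W)) = (a * a) * ((q - Q) * (P - p) * (1 - s)) * (Y * W)"
    unfolding a_def by (simp add: algebra_simps)
  have e3: "(q - Q) * (Q - q) = - ((q - Q) * (q - Q))" by (simp add: algebra_simps)
  have h1': "1 - s \<noteq> 0" using h1 s_def by simp
  have h2': "a \<noteq> 0" using h2 a_def by simp
  show ?thesis unfolding e1 e2 s_def[symmetric] a_def[symmetric] e3
    using h1' h2' by (simp add: field_simps)
qed

lemma fin2: fixes C X E Q I pref Y e K :: complex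
  assumes "- (X * E) = pref * (Y * e * K)"
  shows "- C * X * E * Q * I = pref * (C * Y * e * Q * (K * I))"
proof -
  have "- C * X * E * Q * I = (C * Q * I) * (- (X * E))" by (simp add: algebra_simps)
  also have "\<dots> = (C * Q * I) * (pref * (Y * e * K))" by (simp add: assms)
  also have "\<dots> = pref * (C * Y * e * Q * (K * I))" by (simp add: algebra_simps)
  finally show ?thesis .
qed

lemma first_conj:
  assumes h1: "cmod (z1 - z2) \<noteq> 1" and h2: "z1 \<noteq> cnj z2"
  shows "D12 (Suc (Suc m)) z1 z2 =
           (z1 - cnj z1) * (z2 - cnj z2) * exp (- 2 * of_real ((cmod (z1 - z2))\<^sup>2)) /
             (of_real (1 - (cmod (z1 - z2))\<^sup>2) * of_real ((cmod (z1 - cnj z2))\<^sup>2)) *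
           transpT (D11 (Suc (Suc m))) z1 (cnj z1) z2 (cnj z2)"
proof -
  let ?N = "Suc (Suc m)"
  let ?I = "\<integral>w. DIntg ?N z1 z2 w \<partial>PiM {3..?N} (\<lambda>_. lborel)"
  let ?K = "(z2 - cnj z1) * (cnj z1 - z2) * omega_over z2 (cnj z1) z1 (cnj z2)"
  let ?C = "complex_of_real (real ?N * (real ?N - 1) / Zg ?N)"
  let ?Q = "1 / complex_of_real (pi ^ (?N - 2))"
  let ?X = "exp (- 2 * complex_of_real ((cmod (z1 - z2))\<^sup>2))"
  let ?Y = "exp (-2 * z1 * cnj z2)"
  let ?W = "exp (-2 * z2 * cnj z1)"
  let ?pref = "(z1 - cnj z1) * (z2 - cnj z2) * ?X /
             (of_real (1 - (cmod (z1 - z2))\<^sup>2) * of_real ((cmod (z1 - cnj z2))\<^sup>2))"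
  let ?A = "complex_of_real ((cmod (z1 - cnj z1))\<^sup>2 * (cmod (z2 - cnj z2))\<^sup>2 * (cmod (z1 - cnj z2))\<^sup>2)"
  let ?E = "exp (- 2 * complex_of_real ((cmod z1)\<^sup>2) - 2 * complex_of_real ((cmod z2)\<^sup>2))"
  have T: "transpT (D11 ?N) z1 (cnj z1) z2 (cnj z2) = ?C * ((z1 - cnj z2) * (cnj z2 - z1)) * ?Y * ?Q * (?K * ?I)"
  proof -
    have "transpT (D11 ?N) z1 (cnj z1) z2 (cnj z2) = ?C * ((z1 - cnj z2) * (cnj z2 - z1)) * ?Y * ?Q *
      (\<integral>w. ?K * DIntg ?N z1 z2 w \<partial>PiM {3..?N} (\<lambda>_. lborel))"
      unfolding transpT_def D11_def D11_integrand[OF le_add2[of 2 m, unfolded add_2_eq_Suc']] ..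
    then show ?thesis by simp
  qed
  have D: "D12 ?N z1 z2 = - ?C * ?A * ?E * ?Q * ?I"
    unfolding D12_def DIntg_def ..
  have S: "- (?A * ?E) = ?pref * ((z1 - cnj z2) * (cnj z2 - z1) * ?Y * ?K)"
  proof -
    have h1': "1 - (z1 - z2) * (cnj z1 - cnj z2) \<noteq> 0"
    proof
      assume "1 - (z1 - z2) * (cnj z1 - cnj z2) = 0"
      then have "complex_of_real ((cmod (z1 - z2))\<^sup>2) = 1" unfolding of_real_cmod_sq by simp
      then have "(cmod (z1 - z2))\<^sup>2 = 1" by (metis of_real_eq_1_iff)
      then have "cmod (z1 - z2) = 1" using norm_ge_zero[of "z1 - z2"] by (auto simp: power2_eq_1_iff)
      then show False using h1 by simp
    qed
    have nz: "z1 - cnj z2 \<noteq> 0" using h2 by simp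
    have cz: "cnj z1 - z2 = cnj (z1 - cnj z2)" by simp
    have h2': "(z1 - cnj z2) * (cnj z1 - z2) \<noteq> 0" unfolding cz mult_eq_0_iff complex_cnj_zero_iff using nz by blast
    have A: "?A = (z1 - cnj z1) * (cnj z1 - z1) * ((z2 - cnj z2) * (cnj z2 - z2)) * ((z1 - cnj z2) * (cnj z1 - z2))"
      unfolding of_real_mult of_real_cmod_sq by simp
    have E: "?E = ?X * ?Y * ?W"
    proof -
      have "- 2 * complex_of_real ((cmod z1)\<^sup>2) - 2 * complex_of_real ((cmod z2)\<^sup>2) =
          - 2 * complex_of_real ((cmod (z1 - z2))\<^sup>2) + (-2 * z1 * cnj z2) + (-2 * z2 * cnj z1)"
        unfolding of_real_cmod_sq by (simp add: algebra_simps)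
      then have "?E = exp (- 2 * complex_of_real ((cmod (z1 - z2))\<^sup>2) + (-2 * z1 * cnj z2) + (-2 * z2 * cnj z1))"
        by (rule arg_cong)
      also have "\<dots> = ?X * ?Y * ?W" by (simp only: exp_add)
      finally show ?thesis .
    qed
    have P: "?pref = (z1 - cnj z1) * (z2 - cnj z2) * ?X / ((1 - (z1 - z2) * (cnj z1 - cnj z2)) * ((z1 - cnj z2) * (cnj z1 - z2)))"
      unfolding of_real_diff of_real_cmod_sq by simp
    show ?thesis
      unfolding A E P omega_over_def
      using scal_gen[OF h1' h2', of ?X ?Y ?W] by (simp add: mult_ac)
  qed
  show ?thesis unfolding D T by (rule fin2[OF S])
qed

theorem lemma2p2:
  fixes N :: nat and z1 z2 :: complex
  assumes "N \<ge> 2"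
    and "cmod (z1 - z2) \<noteq> 1"
    and "z1 \<noteq> cnj z2"
    and "invertible_mat (skew_moment_mat (N - 1) z1 (cnj z2))"
  shows "D12 N z1 z2 =
           (z1 - cnj z1) * (z2 - cnj z2) * exp (- 2 * of_real ((cmod (z1 - z2))\<^sup>2)) /
             (of_real (1 - (cmod (z1 - z2))\<^sup>2) * of_real ((cmod (z1 - cnj z2))\<^sup>2)) *
           transpT (D11 N) z1 (cnj z1) z2 (cnj z2) \<and>
         D12 N z1 z2 =
           - (of_nat N * Z_over (N - 1) z1 (cnj z2) / of_real (Zg N)) *
           of_real ((cmod (z1 - cnj z1))\<^sup>2 * (cmod (z2 - cnj z2))\<^sup>2) * (cnj z2 - z1) *
           exp (- 2 * of_real ((cmod z1)\<^sup>2) - 2 * of_real ((cmod z2)\<^sup>2)) *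
           kappa_over (N - 1) z2 (cnj z1) z1 (cnj z2)"
proof -
  define m where "m = N - 2"
  have N: "N = Suc (Suc m)" using assms(1) unfolding m_def by simp
  have m1: "N - 1 = Suc m" using N by simp
  have inv: "invertible_mat (skew_moment_mat (Suc m) z1 (cnj z2))" using assms(4) unfolding m1 .
  show ?thesis unfolding m1 unfolding N
    by (rule conjI[OF first_conj[OF assms(2,3)] second_conj[OF inv]])
qed

end
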